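(* Let $A\ge0$, let $c:S^1_L\to\mathbb R^2$ be an arclength-parametrized immersion with curvature $\kappa$, and consider on $U=\{f\in C^\infty(S^1_L,\mathbb R):\|f\|_\infty<\varepsilon\}$ (for small $\varepsilon>0$) the metric $$G_f(h,k)=\int_{S^1_L}(1+A\kappa_{\psi(f)}^2)\,\frac{hk\,(1-f\kappa)^2}{\sqrt{(1-f\kappa)^2+f'^2}}\,d\theta,\qquad \psi(f)=c+f\,ic'.$$ Define $\Gamma_f$ by $2G_f(\Gamma_f(h,k),l)=dG(f)(l)(h,k)-dG(f)(h)(k,l)-dG(f)(k)(l,h)$ and $$R_f(m,h,m,h)=-d^2G(f)(m,h)(h,m)+\tfrac12d^2G(f)(m,m)(h,h)+\tfrac12d^2G(f)(h,h)(m,m)-G_f(\Gamma_f(h,m),\Gamma_f(m,h))+G_f(\Gamma_f(m,m),\Gamma_f(h,h)),$$ where $dG(f)(l)(h,k)$ and $d^2G(f)(m,l)(h,k)$ denote the first and second derivatives of $f\mapsto G_f(h,k)$ in the directions $l$ and $m,l$. Then at $f=0$: $$\Gamma_0(h,k)=\frac{(\tfrac12\kappa-\tfrac12A\kappa^3+A\kappa'')hk+2A\kappa'(h'k+hk')+2A\kappa h'k'}{1+A\kappa^2},$$ and, with $W=mh'-m'h$, $$R_0(m,h,m,h)=\int_{S^1_L}\frac{-(A\kappa^2-1)^2+4A^2\kappa\kappa''-8A^2\kappa'^2}{2(1+A\kappa^2)}\,W^2\,d\theta+\int_{S^1_L}A\,W'^2\,d\theta.$$ In particular, for $A=0$, $\Gamma_0(h,k)=\tfrac12\kappa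 hk$ and $R_0(m,h,m,h)=-\tfrac12\int_{S^1_L}W^2\,d\theta\le0$, so the sectional curvature $k_0(P(m,h))=-R_0(m,h,m,h)/(G_0(m,m)G_0(h,h)-G_0(m,h)^2)$ is non-negative.
   Context: $S^1_L=\mathbb R/L\mathbb Z$, with $\theta$ the arclength parameter of $c$, so $|c'|\equiv1$; $\mathbb R^2\cong\mathbb C$; primes denote $d/d\theta$. For an immersion $e$, $\kappa_e=\det(e',e'')/|e'|^3$; $\kappa=\kappa_c$. The map $f\mapsto\pi(\psi(f))$ is a chart of the space of unparametrized curves near $\pi(c)$, and $G_f$ is the pullback of the metric $G^A(h,k)=\int(1+A\kappa^2)\langle h,k\rangle|c_\theta|d\theta$ restricted to normal vectors. $h,k,l,m\in C^\infty(S^1_L,\mathbb R)$. *)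

theory Defs
  imports "HOL-Analysis.Analysis"
begin

definition vderiv :: "(real \<Rightarrow> complex) \<Rightarrow> real \<Rightarrow> complex" where
  "vderiv e = (\<lambda>t. vector_derivative e (at t))"

definition smooth_fun :: "(real \<Rightarrow> real) \<Rightarrow> bool" where
  "smooth_fun f \<longleftrightarrow> (\<forall>n t. ((deriv ^^ n) f) differentiable (at t))"

definition smooth_curve :: "(real \<Rightarrow> complex) \<Rightarrow> bool" where
  "smooth_curve e \<longleftrightarrow> (\<forall>n t. ((vderiv ^^ n) e) differentiable (at t))"

text \<open>Functions on S^1_L = R / L Z are L-periodic functions on R.\<close>
definition L_periodic :: "real \<Rightarrow> (real \<Rightarrow> 'b) \<Rightarrow> bool" where
  "L_periodic L f \<longleftrightarrow> (\<forall>x. f (x + L) = f x)"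

definition Cinf :: "real \<Rightarrow> (real \<Rightarrow> real) set" where
  "Cinf L = {f. smooth_fun f \<and> L_periodic L f}"

text \<open>Curvature of an immersion: det(e',e'') / |e'|^3, with det(z,w) = Im(conj z * w).\<close>
definition curv :: "(real \<Rightarrow> complex) \<Rightarrow> real \<Rightarrow> real" where
  "curv e t = Im (cnj (vderiv e t) * vderiv (vderiv e) t) / (cmod (vderiv e t)) ^ 3"

definition psi :: "(real \<Rightarrow> complex) \<Rightarrow> (real \<Rightarrow> real) \<Rightarrow> real \<Rightarrow> complex" where
  "psi c f = (\<lambda>t. c t + complex_of_real (f t) * \<i> * vderiv c t)"

definition Gm :: "(real \<Rightarrow> complex) \<Rightarrow> real \<Rightarrow> real \<Rightarrow> (real \<Rightarrow> real) \<Rightarrow> (real \<Rightarrow> real) \<Rightarrow> (real \<Rightarrow> real) \<Rightarrow> real" where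
  "Gm c A L f h k = integral {0..L} (\<lambda>t.
      (1 + A * (curv (psi c f) t)\<^sup>2) * h t * k t * (1 - f t * curv c t)\<^sup>2
        / sqrt ((1 - f t * curv c t)\<^sup>2 + (deriv f t)\<^sup>2))"

definition dG :: "(real \<Rightarrow> complex) \<Rightarrow> real \<Rightarrow> real \<Rightarrow> (real \<Rightarrow> real) \<Rightarrow> (real \<Rightarrow> real) \<Rightarrow> (real \<Rightarrow> real) \<Rightarrow> (real \<Rightarrow> real) \<Rightarrow> real" where
  "dG c A L f l h k = deriv (\<lambda>s. Gm c A L (\<lambda>t. f t + s * l t) h k) 0"

definition d2G :: "(real \<Rightarrow> complex) \<Rightarrow> real \<Rightarrow> real \<Rightarrow> (real \<Rightarrow> real) \<Rightarrow> (real \<Rightarrow> real) \<Rightarrow> (real \<Rightarrow> real) \<Rightarrow> (real \<Rightarrow> real) \<Rightarrow> (real \<Rightarrow> real) \<Rightarrow> real" where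
  "d2G c A L f m l h k =
     deriv (\<lambda>r. deriv (\<lambda>s. Gm c A L (\<lambda>t. f t + r * m t + s * l t) h k) 0) 0"

definition Chr :: "(real \<Rightarrow> complex) \<Rightarrow> real \<Rightarrow> real \<Rightarrow> (real \<Rightarrow> real) \<Rightarrow> (real \<Rightarrow> real) \<Rightarrow> (real \<Rightarrow> real) \<Rightarrow> (real \<Rightarrow> real)" where
  "Chr c A L f h k = (THE g. g \<in> Cinf L \<and>
     (\<forall>l\<in>Cinf L. 2 * Gm c A L f g l = dG c A L f l h k - dG c A L f h k l - dG c A L f k l h))"

definition Rm :: "(real \<Rightarrow> complex) \<Rightarrow> real \<Rightarrow> real \<Rightarrow> (real \<Rightarrow> real) \<Rightarrow> (real \<Rightarrow> real) \<Rightarrow> (real \<Rightarrow> real) \<Rightarrow> real" where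
  "Rm c A L f m h =
     - d2G c A L f m h h m + 1/2 * d2G c A L f m m h h + 1/2 * d2G c A L f h h m m
     - Gm c A L f (Chr c A L f h m) (Chr c A L f m h)
     + Gm c A L f (Chr c A L f m m) (Chr c A L f h h)"

definition seccurv :: "(real \<Rightarrow> complex) \<Rightarrow> real \<Rightarrow> real \<Rightarrow> (real \<Rightarrow> real) \<Rightarrow> (real \<Rightarrow> real) \<Rightarrow> (real \<Rightarrow> real) \<Rightarrow> real" where
  "seccurv c A L f m h =
     - Rm c A L f m h / (Gm c A L f m m * Gm c A L f h h - (Gm c A L f m h)\<^sup>2)"

end

theory Submission
  imports Defs
begin


definition uf :: "real \<Rightarrow> real \<Rightarrow> real" where "uf x k = 1 - x*k"
definition Nf :: "real \<Rightarrow> real \<Rightarrow> real \<Rightarrow> real" where "Nf x y k = (uf x k)^2 + y^2"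
definition numf :: "real \<Rightarrow> real \<Rightarrow> real \<Rightarrow> real \<Rightarrow> real \<Rightarrow> real" where
 "numf x y z k k1 = k * (uf x k)^2 + uf x k * z + 2*k*y^2 + x*y*k1"
definition Qf :: "real \<Rightarrow> real \<Rightarrow> real \<Rightarrow> real" where "Qf x y k = 1 / sqrt (Nf x y k)"
definition Pf :: "real \<Rightarrow> real \<Rightarrow> real \<Rightarrow> real \<Rightarrow> real \<Rightarrow> real" where
 "Pf x y z k k1 = numf x y z k k1 * Qf x y k ^ 3"
definition Dd :: "real \<Rightarrow> real \<Rightarrow> real \<Rightarrow> real \<Rightarrow> real \<Rightarrow> real \<Rightarrow> real" where
 "Dd A x y z k k1 = (1 + A * (Pf x y z k k1)^2) * (uf x k)^2 * Qf x y k"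

definition ND :: "real \<Rightarrow> real \<Rightarrow> real \<Rightarrow> real \<Rightarrow> real \<Rightarrow> real" where
 "ND x y a b k = 2 * uf x k * (-(a*k)) + 2*y*b"
definition numD :: "real \<Rightarrow> real \<Rightarrow> real \<Rightarrow> real \<Rightarrow> real \<Rightarrow> real \<Rightarrow> real \<Rightarrow> real \<Rightarrow> real" where
 "numD x y z a b c k k1 = 2*k*uf x k*(-(a*k)) + (-(a*k))*z + uf x k*c + 4*k*y*b + (a*y + x*b)*k1"
definition QD :: "real \<Rightarrow> real \<Rightarrow> real \<Rightarrow> real \<Rightarrow> real \<Rightarrow> real" where
 "QD x y a b k = -(1/2) * ND x y a b k * Qf x y k ^ 3"
definition PD :: "real \<Rightarrow> real \<Rightarrow> real \<Rightarrow> real \<Rightarrow> real \<Rightarrow> real \<Rightarrow> real \<Rightarrow> real \<Rightarrow> real" where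
 "PD x y z a b c k k1 = numD x y z a b c k k1 * Qf x y k ^ 3 + 3 * numf x y z k k1 * Qf x y k ^ 2 * QD x y a b k"
definition DD1 :: "real \<Rightarrow> real \<Rightarrow> real \<Rightarrow> real \<Rightarrow> real \<Rightarrow> real \<Rightarrow> real \<Rightarrow> real \<Rightarrow> real \<Rightarrow> real" where
 "DD1 A x y z a b c k k1 = 2*A*Pf x y z k k1*PD x y z a b c k k1*(uf x k)^2*Qf x y k
    + (1 + A*(Pf x y z k k1)^2)*(2*uf x k*(-(a*k))*Qf x y k + (uf x k)^2*QD x y a b k)"

lemma uf_D: "(X has_real_derivative a) (at s) \<Longrightarrow> ((\<lambda>s. uf (X s) k) has_real_derivative (-(a*k))) (at s)"
  unfolding uf_def by (auto intro!: derivative_eq_intros)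

lemma Nf_D: "(X has_real_derivative a) (at s) \<Longrightarrow> (Y has_real_derivative b) (at s) \<Longrightarrow>
   ((\<lambda>s. Nf (X s) (Y s) k) has_real_derivative ND (X s) (Y s) a b k) (at s)"
  unfolding Nf_def ND_def by (auto intro!: derivative_eq_intros uf_D)

lemma numf_D: "(X has_real_derivative a) (at s) \<Longrightarrow> (Y has_real_derivative b) (at s) \<Longrightarrow> (Z has_real_derivative c) (at s) \<Longrightarrow>
   ((\<lambda>s. numf (X s) (Y s) (Z s) k k1) has_real_derivative numD (X s) (Y s) (Z s) a b c k k1) (at s)"
  unfolding numf_def numD_def by (auto intro!: derivative_eq_intros uf_D simp: algebra_simps)

lemma Qf_D: assumes "(X has_real_derivative a) (at s)" "(Y has_real_derivative b) (at s)" "Nf (X s) (Y s) k > 0"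
  shows "((\<lambda>s. Qf (X s) (Y s) k) has_real_derivative QD (X s) (Y s) a b k) (at s)"
proof -
  have N: "((\<lambda>s. Nf (X s) (Y s) k) has_real_derivative ND (X s) (Y s) a b k) (at s)" using Nf_D assms by blast
  have "((\<lambda>s. 1 / sqrt (Nf (X s) (Y s) k)) has_real_derivative
     - (ND (X s) (Y s) a b k * (inverse (sqrt (Nf (X s) (Y s) k)) / 2)) / (sqrt (Nf (X s) (Y s) k))^2) (at s)"
    using assms(3) by (auto intro!: derivative_eq_intros N simp: power2_eq_square)
  moreover have "- (ND (X s) (Y s) a b k * (inverse (sqrt (Nf (X s) (Y s) k)) / 2)) / (sqrt (Nf (X s) (Y s) k))^2
     = QD (X s) (Y s) a b k"
    using assms(3) unfolding QD_def Qf_def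
    by (simp add: field_simps power3_eq_cube)
  ultimately show ?thesis unfolding Qf_def by simp
qed

lemma Dd_D: assumes "(X has_real_derivative a) (at s)" "(Y has_real_derivative b) (at s)" "(Z has_real_derivative c) (at s)"
   "Nf (X s) (Y s) k > 0"
  shows "((\<lambda>s. Dd A (X s) (Y s) (Z s) k k1) has_real_derivative DD1 A (X s) (Y s) (Z s) a b c k k1) (at s)"
proof -
  note u = uf_D[OF assms(1), of k] and q = Qf_D[OF assms(1,2,4)] and n = numf_D[OF assms(1-3), of k k1]
  have p: "((\<lambda>s. Pf (X s) (Y s) (Z s) k k1) has_real_derivative PD (X s) (Y s) (Z s) a b c k k1) (at s)"
    unfolding Pf_def PD_def by (auto intro!: derivative_eq_intros q n simp: algebra_simps)
  show ?thesis unfolding Dd_def DD1_def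
    by (auto intro!: derivative_eq_intros p u q simp: algebra_simps)
qed

definition ND2 :: "real \<Rightarrow> real \<Rightarrow> real \<Rightarrow> real \<Rightarrow> real \<Rightarrow> real" where
 "ND2 a b a2 b2 k = 2*(-(a2*k))*(-(a*k)) + 2*b2*b"
definition numD2 :: "real \<Rightarrow> real \<Rightarrow> real \<Rightarrow> real \<Rightarrow> real \<Rightarrow> real \<Rightarrow> real \<Rightarrow> real \<Rightarrow> real" where
 "numD2 a b c a2 b2 c2 k k1 = 2*k*(-(a2*k))*(-(a*k)) + (-(a*k))*c2 + (-(a2*k))*c + 4*k*b2*b + (a*b2 + a2*b)*k1"
definition QD2 :: "real \<Rightarrow> real \<Rightarrow> real \<Rightarrow> real \<Rightarrow> real \<Rightarrow> real \<Rightarrow> real \<Rightarrow> real" where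
 "QD2 x y a b a2 b2 k = -(1/2)*(ND2 a b a2 b2 k * Qf x y k ^ 3 + ND x y a b k * (3 * Qf x y k ^ 2 * QD x y a2 b2 k))"
definition PD2 :: "real \<Rightarrow> real \<Rightarrow> real \<Rightarrow> real \<Rightarrow> real \<Rightarrow> real \<Rightarrow> real \<Rightarrow> real \<Rightarrow> real \<Rightarrow> real \<Rightarrow> real \<Rightarrow> real" where
 "PD2 x y z a b c a2 b2 c2 k k1 = numD2 a b c a2 b2 c2 k k1 * Qf x y k ^ 3
    + numD x y z a b c k k1 * (3 * Qf x y k ^ 2 * QD x y a2 b2 k)
    + 3 * (numD x y z a2 b2 c2 k k1 * Qf x y k ^ 2 * QD x y a b k
           + numf x y z k k1 * (2 * Qf x y k * QD x y a2 b2 k) * QD x y a b k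
           + numf x y z k k1 * Qf x y k ^ 2 * QD2 x y a b a2 b2 k)"
definition DD12 :: "real \<Rightarrow> real \<Rightarrow> real \<Rightarrow> real \<Rightarrow> real \<Rightarrow> real \<Rightarrow> real \<Rightarrow> real \<Rightarrow> real \<Rightarrow> real \<Rightarrow> real \<Rightarrow> real \<Rightarrow> real" where
 "DD12 A x y z a b c a2 b2 c2 k k1 =
    2*A*(PD x y z a2 b2 c2 k k1 * PD x y z a b c k k1 * (uf x k)^2 * Qf x y k
         + Pf x y z k k1 * PD2 x y z a b c a2 b2 c2 k k1 * (uf x k)^2 * Qf x y k
         + Pf x y z k k1 * PD x y z a b c k k1 * (2 * uf x k * (-(a2*k))) * Qf x y k
         + Pf x y z k k1 * PD x y z a b c k k1 * (uf x k)^2 * QD x y a2 b2 k)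
  + (2*A*Pf x y z k k1 * PD x y z a2 b2 c2 k k1) * (2*uf x k*(-(a*k))*Qf x y k + (uf x k)^2*QD x y a b k)
  + (1 + A*(Pf x y z k k1)^2) * (2*(-(a2*k))*(-(a*k))*Qf x y k + 2*uf x k*(-(a*k))*QD x y a2 b2 k
        + 2*uf x k*(-(a2*k))*QD x y a b k + (uf x k)^2 * QD2 x y a b a2 b2 k)"

lemma ND_D: "(X has_real_derivative a2) (at s) \<Longrightarrow> (Y has_real_derivative b2) (at s) \<Longrightarrow>
   ((\<lambda>s. ND (X s) (Y s) a b k) has_real_derivative ND2 a b a2 b2 k) (at s)"
  unfolding ND_def ND2_def by (auto intro!: derivative_eq_intros uf_D simp: algebra_simps)

lemma numD_D: "(X has_real_derivative a2) (at s) \<Longrightarrow> (Y has_real_derivative b2) (at s) \<Longrightarrow> (Z has_real_derivative c2) (at s) \<Longrightarrow>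
   ((\<lambda>s. numD (X s) (Y s) (Z s) a b c k k1) has_real_derivative numD2 a b c a2 b2 c2 k k1) (at s)"
  unfolding numD_def numD2_def by (auto intro!: derivative_eq_intros uf_D simp: algebra_simps)

lemma QD_D: assumes "(X has_real_derivative a2) (at s)" "(Y has_real_derivative b2) (at s)" "Nf (X s) (Y s) k > 0"
  shows "((\<lambda>s. QD (X s) (Y s) a b k) has_real_derivative QD2 (X s) (Y s) a b a2 b2 k) (at s)"
proof -
  have eq: "(\<lambda>s. QD (X s) (Y s) a b k) = (\<lambda>s. -(1/2) * ND (X s) (Y s) a b k * Qf (X s) (Y s) k ^ 3)"
    by (simp add: QD_def fun_eq_iff)
  show ?thesis unfolding eq
    by (rule derivative_eq_intros ND_D Qf_D assms refl)+ (simp add: QD2_def algebra_simps)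
qed

lemma PD_D: assumes "(X has_real_derivative a2) (at s)" "(Y has_real_derivative b2) (at s)" "(Z has_real_derivative c2) (at s)"
   "Nf (X s) (Y s) k > 0"
  shows "((\<lambda>s. PD (X s) (Y s) (Z s) a b c k k1) has_real_derivative PD2 (X s) (Y s) (Z s) a b c a2 b2 c2 k k1) (at s)"
  unfolding PD_def PD2_def by (auto intro!: derivative_eq_intros numD_D numf_D QD_D Qf_D assms simp: algebra_simps)

lemma DD1_D: assumes "(X has_real_derivative a2) (at s)" "(Y has_real_derivative b2) (at s)" "(Z has_real_derivative c2) (at s)"
   "Nf (X s) (Y s) k > 0"
  shows "((\<lambda>s. DD1 A (X s) (Y s) (Z s) a b c k k1) has_real_derivative DD12 A (X s) (Y s) (Z s) a b c a2 b2 c2 k k1) (at s)"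
proof -
  have p: "((\<lambda>s. Pf (X s) (Y s) (Z s) k k1) has_real_derivative PD (X s) (Y s) (Z s) a2 b2 c2 k k1) (at s)"
    unfolding Pf_def PD_def by (auto intro!: derivative_eq_intros Qf_D numf_D assms simp: algebra_simps)
  show ?thesis unfolding DD1_def DD12_def
    by (auto intro!: derivative_eq_intros p PD_D QD_D Qf_D uf_D assms simp: algebra_simps)
qed

lemma DD1_0: "DD1 A 0 0 0 a b c k k1 = (A*k^3 - k)*a + 2*A*k*c"
  by (simp add: DD1_def Pf_def PD_def numf_def numD_def Qf_def QD_def ND_def Nf_def uf_def algebra_simps power2_eq_square power3_eq_cube)

lemma DD12_0: "DD12 A 0 0 0 a b c a2 b2 c2 k k1 = 2*A*(k*k*k*k)*a*a2 + 4*A*k^2*(a*c2 + c*a2) + 2*A*c*c2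
   + (A*k^2 - 1)*b*b2 + 2*A*k*k1*(a*b2 + b*a2)"
  by (simp add: DD12_def PD2_def QD2_def ND2_def numD2_def Pf_def PD_def numf_def numD_def Qf_def QD_def ND_def Nf_def uf_def algebra_simps power2_eq_square power3_eq_cube)

lemma Dd_0: "Dd A 0 0 0 k k1 = 1 + A*k^2"
  by (simp add: Dd_def Pf_def numf_def Qf_def Nf_def uf_def)


definition Ck :: "nat \<Rightarrow> (real \<Rightarrow> real) \<Rightarrow> bool" where
  "Ck n f \<longleftrightarrow> (\<forall>j\<le>n. \<forall>t. (deriv ^^ j) f differentiable (at t))"

lemma Ck_0: "Ck 0 f \<longleftrightarrow> (\<forall>t. f differentiable (at t))"
  by (simp add: Ck_def)

lemma Ck_Suc: "Ck (Suc n) f \<longleftrightarrow> (\<forall>t. f differentiable (at t)) \<and> Ck n (deriv f)"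
proof
  assume a: "Ck (Suc n) f"
  have "(deriv ^^ j) (deriv f) = (deriv ^^ Suc j) f" for j by (simp add: funpow_Suc_right del: funpow.simps)
  with a show "(\<forall>t. f differentiable (at t)) \<and> Ck n (deriv f)"
    unfolding Ck_def by (metis Suc_le_mono funpow_0 id_apply le0)
next
  assume a: "(\<forall>t. f differentiable (at t)) \<and> Ck n (deriv f)"
  have e: "(deriv ^^ Suc j) f = (deriv ^^ j) (deriv f)" for j by (simp add: funpow_Suc_right del: funpow.simps)
  show "Ck (Suc n) f" unfolding Ck_def
  proof (intro allI impI)
    fix j t assume "j \<le> Suc n"
    then show "(deriv ^^ j) f differentiable (at t)"
      using a e unfolding Ck_def by (cases j) auto
  qed
qed

lemma Ck_mono: "Ck (Suc n) f \<Longrightarrow> Ck n f"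
  by (simp add: Ck_def)

lemma Ck_diff: "Ck n f \<Longrightarrow> \<forall>t. f differentiable (at t)"
  by (auto simp: Ck_def)

lemma smooth_Ck: "smooth_fun f \<longleftrightarrow> (\<forall>n. Ck n f)"
  unfolding smooth_fun_def Ck_def by auto

lemma smooth_diffble: "smooth_fun f \<Longrightarrow> f differentiable (at t)"
  unfolding smooth_fun_def by (metis funpow_0)

lemma smooth_deriv: "smooth_fun f \<Longrightarrow> smooth_fun (deriv f)"
  unfolding smooth_Ck using Ck_Suc by blast

lemma smooth_DERIV: "smooth_fun f \<Longrightarrow> (f has_real_derivative deriv f t) (at t)"
  using smooth_diffble DERIV_deriv_iff_real_differentiable by blast

lemma diffD: "\<forall>t. f differentiable (at t) \<Longrightarrow> (f has_real_derivative deriv f t) (at t)"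
  using DERIV_deriv_iff_real_differentiable by blast

lemma deriv_add_fun: fixes f g :: "real \<Rightarrow> real" assumes F: "\<forall>t. f differentiable (at t)" and G: "\<forall>t. g differentiable (at t)"
  shows "deriv (\<lambda>t. f t + g t) = (\<lambda>t. deriv f t + deriv g t)"
proof (rule ext, rule DERIV_imp_deriv)
  fix t note f = diffD[OF F, of t] and g = diffD[OF G, of t]
  show "((\<lambda>t. f t + g t) has_real_derivative deriv f t + deriv g t) (at t)" using f g by (rule DERIV_add)
qed

lemma deriv_diff_fun: fixes f g :: "real \<Rightarrow> real" assumes F: "\<forall>t. f differentiable (at t)" and G: "\<forall>t. g differentiable (at t)"
  shows "deriv (\<lambda>t. f t - g t) = (\<lambda>t. deriv f t - deriv g t)"
proof (rule ext, rule DERIV_imp_deriv)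
  fix t note f = diffD[OF F, of t] and g = diffD[OF G, of t]
  show "((\<lambda>t. f t - g t) has_real_derivative deriv f t - deriv g t) (at t)" using f g by (rule DERIV_diff)
qed

lemma deriv_mult_fun: fixes f g :: "real \<Rightarrow> real" assumes F: "\<forall>t. f differentiable (at t)" and G: "\<forall>t. g differentiable (at t)"
  shows "deriv (\<lambda>t. f t * g t) = (\<lambda>t. deriv f t * g t + f t * deriv g t)"
proof (rule ext, rule DERIV_imp_deriv)
  fix t note f = diffD[OF F, of t] and g = diffD[OF G, of t]
  show "((\<lambda>t. f t * g t) has_real_derivative deriv f t * g t + f t * deriv g t) (at t)"
    using DERIV_mult[OF f g] by (simp add: algebra_simps)
qed

lemma deriv_div_fun: fixes f g :: "real \<Rightarrow> real" assumes F: "\<forall>t. f differentiable (at t)" and G: "\<forall>t. g differentiable (at t)"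
  and nz: "\<forall>t. g t \<noteq> 0"
  shows "deriv (\<lambda>t. f t / g t) = (\<lambda>t. (deriv f t * g t - f t * deriv g t) / (g t * g t))"
proof (rule ext, rule DERIV_imp_deriv)
  fix t note f = diffD[OF F, of t] and g = diffD[OF G, of t]
  show "((\<lambda>t. f t / g t) has_real_derivative (deriv f t * g t - f t * deriv g t) / (g t * g t)) (at t)"
    using DERIV_divide[OF f g] nz by (simp add: algebra_simps)
qed

lemma deriv_const_fun: "deriv (\<lambda>t. c) = (\<lambda>t. 0::real)"
  by (rule ext, rule DERIV_imp_deriv, auto intro!: derivative_eq_intros)

lemma Ck_const: "Ck n (\<lambda>t. c)"
proof (induction n arbitrary: c)
  case 0 then show ?case by (simp add: Ck_0)
next
  case (Suc n) then show ?case by (simp add: Ck_Suc deriv_const_fun)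
qed

lemma Ck_add: "Ck n f \<Longrightarrow> Ck n g \<Longrightarrow> Ck n (\<lambda>t. f t + g t)"
proof (induction n arbitrary: f g)
  case 0 then show ?case by (simp add: Ck_0)
next
  case (Suc n)
  then show ?case using Suc.IH[of "deriv f" "deriv g"]
    by (simp add: Ck_Suc deriv_add_fun)
qed

lemma Ck_sub: "Ck n f \<Longrightarrow> Ck n g \<Longrightarrow> Ck n (\<lambda>t. f t - g t)"
proof (induction n arbitrary: f g)
  case 0 then show ?case by (simp add: Ck_0)
next
  case (Suc n)
  then show ?case using Suc.IH[of "deriv f" "deriv g"]
    by (simp add: Ck_Suc deriv_diff_fun)
qed

lemma Ck_mult: "Ck n f \<Longrightarrow> Ck n g \<Longrightarrow> Ck n (\<lambda>t. f t * g t)"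
proof (induction n arbitrary: f g)
  case 0 then show ?case by (simp add: Ck_0)
next
  case (Suc n)
  have fd: "\<forall>t. f differentiable (at t)" and gd: "\<forall>t. g differentiable (at t)"
    using Suc.prems by (auto simp: Ck_Suc)
  have "Ck n (\<lambda>t. deriv f t * g t)" using Suc.IH[of "deriv f" g] Suc.prems Ck_mono by (simp add: Ck_Suc)
  moreover have "Ck n (\<lambda>t. f t * deriv g t)" using Suc.IH[of f "deriv g"] Suc.prems Ck_mono by (simp add: Ck_Suc)
  ultimately have "Ck n (deriv (\<lambda>t. f t * g t))" by (simp add: deriv_mult_fun[OF fd gd] Ck_add)
  then show ?case using fd gd by (simp add: Ck_Suc)
qed

lemma Ck_div: "Ck n f \<Longrightarrow> Ck n g \<Longrightarrow> \<forall>t. g t \<noteq> 0 \<Longrightarrow> Ck n (\<lambda>t. f t / g t)"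
proof (induction n arbitrary: f g)
  case 0 then show ?case by (auto simp: Ck_0)
next
  case (Suc n)
  have fd: "\<forall>t. f differentiable (at t)" and gd: "\<forall>t. g differentiable (at t)"
    using Suc.prems by (auto simp: Ck_Suc)
  have gn: "Ck n g" "Ck n f" using Suc.prems Ck_mono by auto
  have d: "Ck n (deriv f)" "Ck n (deriv g)" using Suc.prems by (auto simp: Ck_Suc)
  have "Ck n (\<lambda>t. deriv f t * g t - f t * deriv g t)" by (intro Ck_sub Ck_mult gn d)
  moreover have "Ck n (\<lambda>t. g t * g t)" by (intro Ck_mult gn)
  moreover have "\<forall>t. g t * g t \<noteq> 0" using Suc.prems by simp
  ultimately have "Ck n (deriv (\<lambda>t. f t / g t))"
    using Suc.IH by (simp add: deriv_div_fun[OF fd gd Suc.prems(3)])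
  then show ?case using fd gd Suc.prems(3) by (auto simp: Ck_Suc)
qed

lemma smooth_const[intro]: "smooth_fun (\<lambda>t. c)" by (simp add: smooth_Ck Ck_const)
lemma smooth_add[intro]: "smooth_fun f \<Longrightarrow> smooth_fun g \<Longrightarrow> smooth_fun (\<lambda>t. f t + g t)"
  by (simp add: smooth_Ck Ck_add)
lemma smooth_sub[intro]: "smooth_fun f \<Longrightarrow> smooth_fun g \<Longrightarrow> smooth_fun (\<lambda>t. f t - g t)"
  by (simp add: smooth_Ck Ck_sub)
lemma smooth_mult[intro]: "smooth_fun f \<Longrightarrow> smooth_fun g \<Longrightarrow> smooth_fun (\<lambda>t. f t * g t)"
  by (simp add: smooth_Ck Ck_mult)
lemma smooth_div[intro]: "smooth_fun f \<Longrightarrow> smooth_fun g \<Longrightarrow> \<forall>t. g t \<noteq> 0 \<Longrightarrow> smooth_fun (\<lambda>t. f t / g t)"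
  by (simp add: smooth_Ck Ck_div)
lemma smooth_power[intro]: "smooth_fun f \<Longrightarrow> smooth_fun (\<lambda>t. f t ^ n)"
  by (induction n) (auto simp: smooth_mult[of f "\<lambda>t. f t ^ _", simplified])
lemma smooth_minus[intro]: "smooth_fun f \<Longrightarrow> smooth_fun (\<lambda>t. - f t)"
  using smooth_sub[of "\<lambda>t. 0" f] by auto


lemma sc_diff: "smooth_curve e \<Longrightarrow> e differentiable (at t)"
  unfolding smooth_curve_def by (metis funpow_0)

lemma sc_vderiv: "smooth_curve e \<Longrightarrow> smooth_curve (vderiv e)"
  unfolding smooth_curve_def by (metis funpow_Suc_right comp_apply)

lemma sc_has: "smooth_curve e \<Longrightarrow> (e has_vector_derivative vderiv e t) (at t)"
  unfolding vderiv_def using sc_diff vector_derivative_works by blast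

lemma sc_Re_has: "smooth_curve e \<Longrightarrow> ((\<lambda>t. Re (e t)) has_real_derivative Re (vderiv e t)) (at t)"
  using sc_has has_vector_derivative_complex_iff by blast
lemma sc_Im_has: "smooth_curve e \<Longrightarrow> ((\<lambda>t. Im (e t)) has_real_derivative Im (vderiv e t)) (at t)"
  using sc_has has_vector_derivative_complex_iff by blast

lemma smooth_Re_Im: "smooth_curve e \<Longrightarrow> Ck n (\<lambda>t. Re (e t)) \<and> Ck n (\<lambda>t. Im (e t))"
proof (induction n arbitrary: e)
  case 0 then show ?case unfolding Ck_0 real_differentiable_def using sc_Re_has sc_Im_has by blast
next
  case (Suc n)
  have "deriv (\<lambda>t. Re (e t)) = (\<lambda>t. Re (vderiv e t))" "deriv (\<lambda>t. Im (e t)) = (\<lambda>t. Im (vderiv e t))"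
    using sc_Re_has[OF Suc.prems] sc_Im_has[OF Suc.prems] by (auto intro!: DERIV_imp_deriv)
  then show ?case using Suc.IH[OF sc_vderiv[OF Suc.prems]] sc_Re_has[OF Suc.prems] sc_Im_has[OF Suc.prems]
    by (auto simp: Ck_Suc real_differentiable_def)
qed

lemma smooth_Re[intro]: "smooth_curve e \<Longrightarrow> smooth_fun (\<lambda>t. Re (e t))"
  and smooth_Im[intro]: "smooth_curve e \<Longrightarrow> smooth_fun (\<lambda>t. Im (e t))"
  using smooth_Re_Im by (auto simp: smooth_Ck)

lemma periodic_vderiv: assumes "smooth_curve e" "L_periodic L e" shows "L_periodic L (vderiv e)"
  unfolding L_periodic_def
proof
  fix t
  have "((\<lambda>x. x + L) has_vector_derivative 1) (at t)" by (auto intro!: derivative_eq_intros)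
  from vector_diff_chain_at[OF this sc_has[OF assms(1), of "t + L"]]
  have "((e \<circ> (\<lambda>x. x + L)) has_vector_derivative vderiv e (t + L)) (at t)" by simp
  moreover have "e \<circ> (\<lambda>x. x + L) = e" using assms(2) by (auto simp: L_periodic_def)
  ultimately have "(e has_vector_derivative vderiv e (t + L)) (at t)" by simp
  then show "vderiv e (t + L) = vderiv e t" unfolding vderiv_def using vector_derivative_at by metis
qed

lemma periodic_deriv: assumes "smooth_fun f" "L_periodic L f" shows "L_periodic L (deriv f)"
  unfolding L_periodic_def
proof
  fix t
  have "(f has_real_derivative deriv f (t + L)) (at (t + L))" using smooth_DERIV[OF assms(1)] .
  then have "((\<lambda>x. f (x + L)) has_real_derivative deriv f (t + L)) (at t)" by (simp add: DERIV_shift)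
  moreover have "(\<lambda>x. f (x + L)) = f" using assms(2) by (auto simp: L_periodic_def)
  ultimately show "deriv f (t + L) = deriv f t" using DERIV_imp_deriv by metis
qed

lemma Cinf_deriv: "f \<in> Cinf L \<Longrightarrow> deriv f \<in> Cinf L"
  by (simp add: Cinf_def smooth_deriv periodic_deriv)

context
  fixes c :: "real \<Rightarrow> complex"
  assumes sc: "smooth_curve c" and unit: "\<forall>t. cmod (vderiv c t) = 1"
begin

lemma curv_eq: "curv c = (\<lambda>t. Re (vderiv c t) * Im (vderiv (vderiv c) t) - Im (vderiv c t) * Re (vderiv (vderiv c) t))"
  using unit by (auto simp: curv_def fun_eq_iff algebra_simps)

lemma smooth_curv: "smooth_fun (curv c)"
  unfolding curv_eq using sc sc_vderiv by (intro smooth_sub smooth_mult smooth_Re smooth_Im) auto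

lemma C2_eq: "vderiv (vderiv c) t = \<i> * complex_of_real (curv c t) * vderiv c t"
proof -
  define x where "x = (\<lambda>t. Re (vderiv c t))"
  define y where "y = (\<lambda>t. Im (vderiv c t))"
  have one: "\<And>t. x t ^ 2 + y t ^ 2 = 1" using unit unfolding x_def y_def
    by (metis cmod_power2 one_power2)
  have hx: "(x has_real_derivative Re (vderiv (vderiv c) t)) (at t)" unfolding x_def
    using sc_Re_has[OF sc_vderiv[OF sc]] .
  have hy: "(y has_real_derivative Im (vderiv (vderiv c) t)) (at t)" unfolding y_def
    using sc_Im_has[OF sc_vderiv[OF sc]] .
  have "((\<lambda>t. x t ^ 2 + y t ^ 2) has_real_derivative
      2 * x t * Re (vderiv (vderiv c) t) + 2 * y t * Im (vderiv (vderiv c) t)) (at t)"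
    by (auto intro!: derivative_eq_intros hx hy)
  moreover have "(\<lambda>t. x t ^ 2 + y t ^ 2) = (\<lambda>t. 1)" using one by auto
  ultimately have "((\<lambda>t. 1) has_real_derivative
      2 * x t * Re (vderiv (vderiv c) t) + 2 * y t * Im (vderiv (vderiv c) t)) (at t)" by simp
  then have z: "2 * x t * Re (vderiv (vderiv c) t) + 2 * y t * Im (vderiv (vderiv c) t) = 0"
    using DERIV_const DERIV_unique by blast
  have k: "curv c t = x t * Im (vderiv (vderiv c) t) - y t * Re (vderiv (vderiv c) t)"
    unfolding curv_eq x_def y_def by simp
  show ?thesis
  proof (rule complex_eqI)
    show "Re (vderiv (vderiv c) t) = Re (\<i> * complex_of_real (curv c t) * vderiv c t)"
      using one[of t] z unfolding k x_def y_def by simp algebra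
    show "Im (vderiv (vderiv c) t) = Im (\<i> * complex_of_real (curv c t) * vderiv c t)"
      using one[of t] z unfolding k x_def y_def by simp algebra
  qed
qed

end


context
  fixes c :: "real \<Rightarrow> complex"
  assumes sc: "smooth_curve c" and unit: "\<forall>t. cmod (vderiv c t) = 1"
begin

lemma vderiv_psi: fixes f :: "real \<Rightarrow> real" assumes fd: "\<forall>t. f differentiable (at t)"
  shows "vderiv (psi c f) = (\<lambda>t. vderiv c t * (complex_of_real (1 - f t * curv c t) + \<i> * complex_of_real (deriv f t)))"
proof (rule ext)
  fix t
  have F: "(f has_real_derivative deriv f t) (at t)" using diffD[OF fd] .
  have "(psi c f has_vector_derivative
      vderiv c t + (complex_of_real (f t) * \<i> * vderiv (vderiv c) t + (complex_of_real (deriv f t) * \<i> + complex_of_real (f t) * 0) * vderiv c t)) (at t)"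
    unfolding psi_def
    by (rule derivative_eq_intros sc_has[OF sc] sc_has[OF sc_vderiv[OF sc]] F refl)+ (simp add: algebra_simps)
  also have "vderiv c t + (complex_of_real (f t) * \<i> * vderiv (vderiv c) t + (complex_of_real (deriv f t) * \<i> + complex_of_real (f t) * 0) * vderiv c t)
     = vderiv c t * (complex_of_real (1 - f t * curv c t) + \<i> * complex_of_real (deriv f t))"
    unfolding C2_eq[OF sc unit] by (simp add: algebra_simps)
  finally show "vderiv (psi c f) t = vderiv c t * (complex_of_real (1 - f t * curv c t) + \<i> * complex_of_real (deriv f t))"
    unfolding vderiv_def using vector_derivative_at by blast
qed

lemma vderiv2_psi: fixes f :: "real \<Rightarrow> real" assumes fd: "\<forall>t. f differentiable (at t)"
    and fd2: "\<forall>t. deriv f differentiable (at t)"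
  shows "vderiv (vderiv (psi c f)) t = vderiv c t * (complex_of_real (- (deriv f t * curv c t + f t * deriv (curv c) t))
       + \<i> * complex_of_real (deriv (deriv f) t))
     + vderiv (vderiv c) t * (complex_of_real (1 - f t * curv c t) + \<i> * complex_of_real (deriv f t))"
proof -
  have F: "(f has_real_derivative deriv f t) (at t)" using diffD[OF fd] .
  have F2: "(deriv f has_real_derivative deriv (deriv f) t) (at t)" using diffD[OF fd2] .
  have K: "(curv c has_real_derivative deriv (curv c) t) (at t)" using smooth_DERIV[OF smooth_curv[OF sc unit]] .
  have "((\<lambda>t. vderiv c t * (complex_of_real (1 - f t * curv c t) + \<i> * complex_of_real (deriv f t))) has_vector_derivative
     vderiv c t * (complex_of_real (0 - (deriv f t * curv c t + deriv (curv c) t * f t)) + \<i> * complex_of_real (deriv (deriv f) t))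
     + vderiv (vderiv c) t * (complex_of_real (1 - f t * curv c t) + \<i> * complex_of_real (deriv f t))) (at t)"
    by (rule derivative_eq_intros sc_has[OF sc_vderiv[OF sc]] F F2 K refl)+ (simp add: algebra_simps)
  then have "vderiv (\<lambda>t. vderiv c t * (complex_of_real (1 - f t * curv c t) + \<i> * complex_of_real (deriv f t))) t =
     vderiv c t * (complex_of_real (0 - (deriv f t * curv c t + deriv (curv c) t * f t)) + \<i> * complex_of_real (deriv (deriv f) t))
     + vderiv (vderiv c) t * (complex_of_real (1 - f t * curv c t) + \<i> * complex_of_real (deriv f t))"
    unfolding vderiv_def by (rule vector_derivative_at)
  then show ?thesis unfolding vderiv_psi[OF fd] by (simp add: algebra_simps)
qed

lemma curv_psi: fixes f :: "real \<Rightarrow> real" assumes fd: "\<forall>t. f differentiable (at t)"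
    and fd2: "\<forall>t. deriv f differentiable (at t)"
  shows "curv (psi c f) t = Pf (f t) (deriv f t) (deriv (deriv f) t) (curv c t) (deriv (curv c) t)"
proof -
  define u where "u = 1 - f t * curv c t"
  define y where "y = deriv f t"
  define z where "z = deriv (deriv f) t"
  define k where "k = curv c t"
  define k1 where "k1 = deriv (curv c) t"
  define p where "p = - (y * k + f t * k1)"
  define a where "a = complex_of_real u + \<i> * complex_of_real y"
  define a' where "a' = complex_of_real p + \<i> * complex_of_real z"
  have d1: "vderiv (psi c f) t = vderiv c t * a" unfolding vderiv_psi[OF fd] a_def u_def y_def by simp
  have d2: "vderiv (vderiv (psi c f)) t = vderiv c t * (a' + \<i> * complex_of_real k * a)"
    unfolding vderiv2_psi[OF fd fd2] C2_eq[OF sc unit] a_def a'_def p_def u_def y_def z_def k_def k1_def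
    by (simp add: algebra_simps)
  have cc: "cnj (vderiv c t) * vderiv c t = 1"
    using unit complex_norm_square[of "vderiv c t"] by (simp add: mult.commute)
  have "cnj (vderiv c t * a) * (vderiv c t * (a' + \<i> * complex_of_real k * a))
      = (cnj (vderiv c t) * vderiv c t) * (cnj a * (a' + \<i> * complex_of_real k * a))"
    by (simp add: algebra_simps)
  also have "\<dots> = cnj a * (a' + \<i> * complex_of_real k * a)" using cc by simp
  finally have e0: "cnj (vderiv c t * a) * (vderiv c t * (a' + \<i> * complex_of_real k * a)) = cnj a * (a' + \<i> * complex_of_real k * a)" .
  have "Im (cnj a * (a' + \<i> * complex_of_real k * a)) = numf (f t) y z k k1"
    unfolding numf_def uf_def a_def a'_def p_def u_def k_def by (simp add: algebra_simps power2_eq_square)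
  then have e1: "Im (cnj (vderiv c t * a) * (vderiv c t * (a' + \<i> * complex_of_real k * a)))
     = numf (f t) y z k k1" unfolding e0 .
  have e2: "cmod (vderiv c t * a) = sqrt (Nf (f t) y k)"
  proof -
    have "cmod (vderiv c t * a) = cmod a" using unit by (simp add: norm_mult)
    also have "\<dots> = sqrt (Nf (f t) y k)" unfolding a_def Nf_def uf_def u_def k_def cmod_def by simp
    finally show ?thesis .
  qed
  show ?thesis unfolding curv_def[of "psi c f"] d1 d2 e1 e2 Pf_def Qf_def
    by (simp add: y_def z_def k_def k1_def power_divide)
qed

lemma Gm_eq: fixes f :: "real \<Rightarrow> real" assumes fd: "\<forall>t. f differentiable (at t)"
    and fd2: "\<forall>t. deriv f differentiable (at t)"
  shows "Gm c A L f h k = integral {0..L} (\<lambda>t. h t * k t * Dd A (f t) (deriv f t) (deriv (deriv f) t) (curv c t) (deriv (curv c) t))"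
  unfolding Gm_def curv_psi[OF fd fd2] Dd_def Qf_def Nf_def uf_def
  by (intro arg_cong[where f = "integral {0..L}"] ext) (simp add: field_simps)

end


lemma leib:
  fixes \<Phi> \<Phi>' :: "real \<Rightarrow> real \<Rightarrow> real"
  assumes d: "\<delta> > 0"
    and der: "\<And>s t. s \<in> ball 0 \<delta> \<Longrightarrow> t \<in> {0..L} \<Longrightarrow> ((\<lambda>s. \<Phi> s t) has_real_derivative \<Phi>' s t) (at s)"
    and cont: "continuous_on (ball 0 \<delta> \<times> {0..L}) (\<lambda>p. \<Phi>' (fst p) (snd p))"
    and ci: "\<And>s. s \<in> ball 0 \<delta> \<Longrightarrow> continuous_on {0..L} (\<Phi> s)"
    and s0: "s0 \<in> ball 0 \<delta>"
  shows "((\<lambda>s. integral {0..L} (\<Phi> s)) has_real_derivative integral {0..L} (\<Phi>' s0)) (at s0)"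
proof -
  have "((\<lambda>s. integral (cbox 0 L) (\<Phi> s)) has_real_derivative integral (cbox 0 L) (\<Phi>' s0)) (at s0 within ball 0 \<delta>)"
  proof (rule leibniz_rule_field_derivative)
    show "\<And>x t. x \<in> ball 0 \<delta> \<Longrightarrow> t \<in> cbox 0 L \<Longrightarrow> ((\<lambda>x. \<Phi> x t) has_real_derivative \<Phi>' x t) (at x within ball 0 \<delta>)"
      using der by (auto intro: has_field_derivative_at_within)
    show "\<And>x. x \<in> ball 0 \<delta> \<Longrightarrow> \<Phi> x integrable_on cbox 0 L"
      using ci by (auto intro: integrable_continuous_interval)
    show "continuous_on (ball 0 \<delta> \<times> cbox 0 L) (\<lambda>(x, t). \<Phi>' x t)"
      using cont by (simp add: case_prod_beta')
  qed (use s0 in auto)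
  then show ?thesis using at_within_open[of s0 "ball 0 \<delta>"] s0 by simp
qed

lemma cont_snd[continuous_intros]: "continuous_on UNIV f \<Longrightarrow> continuous_on S (\<lambda>p. f (snd p))"
  by (rule continuous_on_compose2[OF _ continuous_on_snd]) auto

lemma Qf_cont[continuous_intros]:
  assumes "continuous_on S X" "continuous_on S Y" "continuous_on S K" "\<And>x. x \<in> S \<Longrightarrow> Nf (X x) (Y x) (K x) > 0"
  shows "continuous_on S (\<lambda>x. Qf (X x) (Y x) (K x))"
proof -
  have "\<forall>x\<in>S. sqrt ((1 - X x * K x)\<^sup>2 + (Y x)\<^sup>2) \<noteq> 0"
    using assms(4) unfolding Nf_def uf_def by (metis less_irrefl real_sqrt_eq_zero_cancel_iff)
  then show ?thesis unfolding Qf_def Nf_def uf_def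
    by (intro continuous_intros assms(1-3))
qed

lemma smooth_cont: "smooth_fun f \<Longrightarrow> continuous_on S f"
  by (meson continuous_at_imp_continuous_on differentiable_imp_continuous_within smooth_diffble)

lemma cont_bound: assumes "continuous_on {0..L} (f :: real \<Rightarrow> real)" shows "\<exists>B>0. \<forall>t\<in>{0..L}. \<bar>f t\<bar> \<le> B"
proof -
  have "bounded (f ` {0..L})" by (rule compact_imp_bounded, rule compact_continuous_image[OF assms]) auto
  then show ?thesis unfolding bounded_pos by auto
qed

lemma small_bound:
  fixes m l K :: "real \<Rightarrow> real"
  assumes "continuous_on {0..L} m" "continuous_on {0..L} l" "continuous_on {0..L} K"
  shows "\<exists>\<delta>>0. \<forall>r s t. \<bar>r\<bar> < \<delta> \<longrightarrow> \<bar>s\<bar> < \<delta> \<longrightarrow> t \<in> {0..L} \<longrightarrow> \<bar>(r * m t + s * l t) * K t\<bar> < 1"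
proof -
  obtain Bm where Bm: "Bm > 0" "\<forall>t\<in>{0..L}. \<bar>m t\<bar> \<le> Bm" using cont_bound[OF assms(1)] by auto
  obtain Bl where Bl: "Bl > 0" "\<forall>t\<in>{0..L}. \<bar>l t\<bar> \<le> Bl" using cont_bound[OF assms(2)] by auto
  obtain Bk where Bk: "Bk > 0" "\<forall>t\<in>{0..L}. \<bar>K t\<bar> \<le> Bk" using cont_bound[OF assms(3)] by auto
  define \<delta> where "\<delta> = 1 / ((Bm + Bl) * Bk + 1)"
  have dpos: "\<delta> > 0" unfolding \<delta>_def using Bm Bl Bk by (simp add: add_pos_pos)
  have X: "(Bm + Bl) * Bk \<ge> 0" using Bm Bl Bk by simp
  have key: "\<delta> * ((Bm + Bl) * Bk) < 1" unfolding \<delta>_def using X by (simp add: divide_less_eq_1_pos)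
  show ?thesis
  proof (intro exI[of _ \<delta>] conjI allI impI dpos)
    fix r s t assume r: "\<bar>r\<bar> < \<delta>" and s: "\<bar>s\<bar> < \<delta>" and t: "t \<in> {0..L}"
    have "\<bar>r * m t + s * l t\<bar> \<le> \<bar>r\<bar> * \<bar>m t\<bar> + \<bar>s\<bar> * \<bar>l t\<bar>" by (metis abs_mult abs_triangle_ineq)
    also have "\<dots> \<le> \<delta> * Bm + \<delta> * Bl" using r s t Bm Bl
      by (intro add_mono mult_mono) auto
    finally have a: "\<bar>r * m t + s * l t\<bar> \<le> \<delta> * (Bm + Bl)" by (simp add: algebra_simps)
    have "\<bar>(r * m t + s * l t) * K t\<bar> \<le> \<delta> * (Bm + Bl) * Bk"
      unfolding abs_mult using a Bk t by (intro mult_mono) auto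
    with key show "\<bar>(r * m t + s * l t) * K t\<bar> < 1" by (simp add: algebra_simps)
  qed
qed

lemma Nf_pos: "\<bar>x * k\<bar> < 1 \<Longrightarrow> Nf x y k > 0"
  unfolding Nf_def uf_def
  by (smt (verit, best) abs_le_iff power2_less_0 zero_less_power2)

lemma int_Dd_deriv:
  fixes H p q w a b c K K1 :: "real \<Rightarrow> real"
  assumes cont: "continuous_on UNIV H" "continuous_on UNIV p" "continuous_on UNIV q" "continuous_on UNIV w"
    "continuous_on UNIV a" "continuous_on UNIV b" "continuous_on UNIV c" "continuous_on UNIV K" "continuous_on UNIV K1"
    and d: "\<delta> > 0" and pos: "\<And>s t. s \<in> ball 0 \<delta> \<Longrightarrow> t \<in> {0..L} \<Longrightarrow> Nf (p t + s * a t) (q t + s * b t) (K t) > 0"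
    and s0: "s0 \<in> ball 0 \<delta>"
  shows "((\<lambda>s. integral {0..L} (\<lambda>t. H t * Dd A (p t + s * a t) (q t + s * b t) (w t + s * c t) (K t) (K1 t)))
     has_real_derivative
     integral {0..L} (\<lambda>t. H t * DD1 A (p t + s0 * a t) (q t + s0 * b t) (w t + s0 * c t) (a t) (b t) (c t) (K t) (K1 t))) (at s0)"
proof (rule leib[OF d _ _ _ s0, where \<Phi> = "\<lambda>s t. H t * Dd A (p t + s * a t) (q t + s * b t) (w t + s * c t) (K t) (K1 t)"])
  fix s t :: real assume "s \<in> ball 0 \<delta>" "t \<in> {0..L}"
  then have P: "Nf (p t + s * a t) (q t + s * b t) (K t) > 0" using pos by auto
  show "((\<lambda>s. H t * Dd A (p t + s * a t) (q t + s * b t) (w t + s * c t) (K t) (K1 t)) has_real_derivative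
     H t * DD1 A (p t + s * a t) (q t + s * b t) (w t + s * c t) (a t) (b t) (c t) (K t) (K1 t)) (at s)"
    by (intro DERIV_cmult Dd_D[where X = "\<lambda>s. p t + s * a t" and Y = "\<lambda>s. q t + s * b t" and Z = "\<lambda>s. w t + s * c t", OF _ _ _ P])
       (auto intro!: derivative_eq_intros)
next
  have cu: "continuous_on S f" if "continuous_on UNIV f" for S and f :: "real \<Rightarrow> real"
    using that continuous_on_subset by blast
  show "continuous_on (ball 0 \<delta> \<times> {0..L}) (\<lambda>x. H (snd x) * DD1 A (p (snd x) + fst x * a (snd x)) (q (snd x) + fst x * b (snd x))
       (w (snd x) + fst x * c (snd x)) (a (snd x)) (b (snd x)) (c (snd x)) (K (snd x)) (K1 (snd x)))"
    unfolding DD1_def PD_def QD_def ND_def numD_def Pf_def numf_def uf_def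
    by (intro continuous_intros cont) (use pos in \<open>auto simp: mem_Times_iff\<close>)
  fix s :: real assume "s \<in> ball 0 \<delta>"
  then show "continuous_on {0..L} (\<lambda>t. H t * Dd A (p t + s * a t) (q t + s * b t) (w t + s * c t) (K t) (K1 t))"
    unfolding Dd_def Pf_def numf_def uf_def
    by (intro continuous_intros cu[OF cont(1)] cu[OF cont(2)] cu[OF cont(3)] cu[OF cont(4)] cu[OF cont(5)]
         cu[OF cont(6)] cu[OF cont(7)] cu[OF cont(8)] cu[OF cont(9)]) (use pos in auto)
qed


lemma int_DD1_deriv:
  fixes H p q w a b c ea eb ec K K1 :: "real \<Rightarrow> real"
  assumes cont: "continuous_on UNIV H" "continuous_on UNIV p" "continuous_on UNIV q" "continuous_on UNIV w"
    "continuous_on UNIV a" "continuous_on UNIV b" "continuous_on UNIV c" "continuous_on UNIV K" "continuous_on UNIV K1"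
    "continuous_on UNIV ea" "continuous_on UNIV eb" "continuous_on UNIV ec"
    and d: "\<delta> > 0" and pos: "\<And>s t. s \<in> ball 0 \<delta> \<Longrightarrow> t \<in> {0..L} \<Longrightarrow> Nf (p t + s * a t) (q t + s * b t) (K t) > 0"
    and s0: "s0 \<in> ball 0 \<delta>"
  shows "((\<lambda>s. integral {0..L} (\<lambda>t. H t * DD1 A (p t + s * a t) (q t + s * b t) (w t + s * c t) (ea t) (eb t) (ec t) (K t) (K1 t)))
     has_real_derivative
     integral {0..L} (\<lambda>t. H t * DD12 A (p t + s0 * a t) (q t + s0 * b t) (w t + s0 * c t) (ea t) (eb t) (ec t) (a t) (b t) (c t) (K t) (K1 t))) (at s0)"
proof (rule leib[OF d _ _ _ s0, where \<Phi> = "\<lambda>s t. H t * DD1 A (p t + s * a t) (q t + s * b t) (w t + s * c t) (ea t) (eb t) (ec t) (K t) (K1 t)"])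
  fix s t :: real assume "s \<in> ball 0 \<delta>" "t \<in> {0..L}"
  then have P: "Nf (p t + s * a t) (q t + s * b t) (K t) > 0" using pos by auto
  show "((\<lambda>s. H t * DD1 A (p t + s * a t) (q t + s * b t) (w t + s * c t) (ea t) (eb t) (ec t) (K t) (K1 t)) has_real_derivative
     H t * DD12 A (p t + s * a t) (q t + s * b t) (w t + s * c t) (ea t) (eb t) (ec t) (a t) (b t) (c t) (K t) (K1 t)) (at s)"
    by (intro DERIV_cmult DD1_D[where X = "\<lambda>s. p t + s * a t" and Y = "\<lambda>s. q t + s * b t" and Z = "\<lambda>s. w t + s * c t", OF _ _ _ P])
       (auto intro!: derivative_eq_intros)
next
  have cu: "continuous_on S f" if "continuous_on UNIV f" for S and f :: "real \<Rightarrow> real"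
    using that continuous_on_subset by blast
  show "continuous_on (ball 0 \<delta> \<times> {0..L}) (\<lambda>x. H (snd x) * DD12 A (p (snd x) + fst x * a (snd x)) (q (snd x) + fst x * b (snd x))
       (w (snd x) + fst x * c (snd x)) (ea (snd x)) (eb (snd x)) (ec (snd x)) (a (snd x)) (b (snd x)) (c (snd x)) (K (snd x)) (K1 (snd x)))"
    unfolding DD12_def PD2_def QD2_def ND2_def numD2_def PD_def QD_def ND_def numD_def Pf_def numf_def uf_def
    by (intro continuous_intros cont) (use pos in \<open>auto simp: mem_Times_iff\<close>)
  fix s :: real assume "s \<in> ball 0 \<delta>"
  then show "continuous_on {0..L} (\<lambda>t. H t * DD1 A (p t + s * a t) (q t + s * b t) (w t + s * c t) (ea t) (eb t) (ec t) (K t) (K1 t))"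
    unfolding DD1_def PD_def QD_def ND_def numD_def Pf_def numf_def uf_def
    by (intro continuous_intros cu[OF cont(1)] cu[OF cont(2)] cu[OF cont(3)] cu[OF cont(4)] cu[OF cont(5)]
         cu[OF cont(6)] cu[OF cont(7)] cu[OF cont(8)] cu[OF cont(9)] cu[OF cont(10)] cu[OF cont(11)] cu[OF cont(12)]) (use pos in auto)
qed

lemma deriv_lin2: assumes "smooth_fun m" "smooth_fun l"
  shows "deriv (\<lambda>t. x + r * m t + s * l t) = (\<lambda>t. r * deriv m t + s * deriv l t)"
  by (rule ext, rule DERIV_imp_deriv) (auto intro!: derivative_eq_intros smooth_DERIV assms)

lemma deriv_lin2': assumes "smooth_fun m" "smooth_fun l"
  shows "deriv (\<lambda>t. r * m t + s * l t) = (\<lambda>t. r * deriv m t + s * deriv l t)"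
  by (rule ext, rule DERIV_imp_deriv) (auto intro!: derivative_eq_intros smooth_DERIV assms)

lemma deriv_lin1: assumes "smooth_fun l"
  shows "deriv (\<lambda>t. x + s * l t) = (\<lambda>t. s * deriv l t)"
  by (rule ext, rule DERIV_imp_deriv) (auto intro!: derivative_eq_intros smooth_DERIV assms)

lemma deriv_lin1': assumes "smooth_fun l"
  shows "deriv (\<lambda>t. s * l t) = (\<lambda>t. s * deriv l t)"
  by (rule ext, rule DERIV_imp_deriv) (auto intro!: derivative_eq_intros smooth_DERIV assms)

context
  fixes c :: "real \<Rightarrow> complex"
  assumes sc: "smooth_curve c" and unit: "\<forall>t. cmod (vderiv c t) = 1"
begin

lemma Gm_lin2: assumes m: "smooth_fun m" and l: "smooth_fun l"
  shows "Gm c A L (\<lambda>t. 0 + r * m t + s * l t) h k = integral {0..L} (\<lambda>t. h t * k t *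
     Dd A (r * m t + s * l t) (r * deriv m t + s * deriv l t) (r * deriv (deriv m) t + s * deriv (deriv l) t) (curv c t) (deriv (curv c) t))"
proof -
  have sm: "smooth_fun (\<lambda>t. 0 + r * m t + s * l t)" by (intro smooth_add smooth_mult smooth_const m l)
  have sd: "smooth_fun (deriv (\<lambda>t. 0 + r * m t + s * l t))" using smooth_deriv[OF sm] .
  show ?thesis
    by (subst Gm_eq[OF sc unit]) (use smooth_diffble sm sd in \<open>auto simp: deriv_lin2 deriv_lin2' m l smooth_deriv\<close>)
qed

lemma Gm_lin1: assumes l: "smooth_fun l"
  shows "Gm c A L (\<lambda>t. 0 + s * l t) h k = integral {0..L} (\<lambda>t. h t * k t *
     Dd A (s * l t) (s * deriv l t) (s * deriv (deriv l) t) (curv c t) (deriv (curv c) t))"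
proof -
  have sm: "smooth_fun (\<lambda>t. 0 + s * l t)" by (intro smooth_add smooth_mult smooth_const l)
  have sd: "smooth_fun (deriv (\<lambda>t. 0 + s * l t))" using smooth_deriv[OF sm] .
  show ?thesis
    by (subst Gm_eq[OF sc unit]) (use smooth_diffble sm sd in \<open>auto simp: deriv_lin1 deriv_lin1' l smooth_deriv\<close>)
qed

lemma dG_formula: assumes l: "smooth_fun l" and h: "smooth_fun h" and k: "smooth_fun k"
  shows "dG c A L (\<lambda>_. 0) l h k = integral {0..L} (\<lambda>t. h t * k t *
    ((A * curv c t ^ 3 - curv c t) * l t + 2 * A * curv c t * deriv (deriv l) t))"
proof -
  have sk: "smooth_fun (curv c)" using smooth_curv[OF sc unit] .
  have cU: "continuous_on UNIV f" if "smooth_fun f" for f using smooth_cont that by blast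
  obtain \<delta> where d: "\<delta> > 0" and b: "\<forall>r s t. \<bar>r\<bar> < \<delta> \<longrightarrow> \<bar>s\<bar> < \<delta> \<longrightarrow> t \<in> {0..L} \<longrightarrow> \<bar>(r * l t + s * l t) * curv c t\<bar> < 1"
    using small_bound[of L l l "curv c"] cU l sk continuous_on_subset by blast
  have pos: "Nf (0 + s * l t) (0 + s * deriv l t) (curv c t) > 0" if "s \<in> ball 0 \<delta>" "t \<in> {0..L}" for s t
    using b[rule_format, of 0 s t] that d by (intro Nf_pos) auto
  have D: "((\<lambda>s. integral {0..L} (\<lambda>t. (h t * k t) * Dd A (0 + s * l t) (0 + s * deriv l t) (0 + s * deriv (deriv l) t) (curv c t) (deriv (curv c) t)))
     has_real_derivative
     integral {0..L} (\<lambda>t. (h t * k t) * DD1 A (0 + 0 * l t) (0 + 0 * deriv l t) (0 + 0 * deriv (deriv l) t) (l t) (deriv l t) (deriv (deriv l) t) (curv c t) (deriv (curv c) t))) (at 0)"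
    by (rule int_Dd_deriv[OF _ _ _ _ _ _ _ _ _ d pos]) (use d in \<open>auto intro!: cU smooth_deriv l h k sk smooth_mult\<close>)
  have E: "(\<lambda>s. Gm c A L (\<lambda>t. 0 + s * l t) h k) = (\<lambda>s. integral {0..L} (\<lambda>t. (h t * k t) * Dd A (0 + s * l t) (0 + s * deriv l t) (0 + s * deriv (deriv l) t) (curv c t) (deriv (curv c) t)))"
    by (rule ext, subst Gm_lin1[OF l]) (simp add: mult.assoc)
  show ?thesis unfolding dG_def using DERIV_imp_deriv[OF D] E
    by (simp add: DD1_0 mult.assoc)
qed

lemma d2G_formula: assumes m: "smooth_fun m" and l: "smooth_fun l" and h: "smooth_fun h" and k: "smooth_fun k"
  shows "d2G c A L (\<lambda>_. 0) m l h k = integral {0..L} (\<lambda>t. h t * k t *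
    (2*A*(curv c t*curv c t*curv c t*curv c t)*l t*m t + 4*A*(curv c t)^2*(l t*deriv (deriv m) t + deriv (deriv l) t*m t)
     + 2*A*deriv (deriv l) t*deriv (deriv m) t + (A*(curv c t)^2 - 1)*deriv l t*deriv m t
     + 2*A*curv c t*deriv (curv c) t*(l t*deriv m t + deriv l t*m t)))"
proof -
  have sk: "smooth_fun (curv c)" using smooth_curv[OF sc unit] .
  have cU: "continuous_on UNIV f" if "smooth_fun f" for f using smooth_cont that by blast
  obtain \<delta> where d: "\<delta> > 0" and b: "\<forall>r s t. \<bar>r\<bar> < \<delta> \<longrightarrow> \<bar>s\<bar> < \<delta> \<longrightarrow> t \<in> {0..L} \<longrightarrow> \<bar>(r * m t + s * l t) * curv c t\<bar> < 1"
    using small_bound[of L m l "curv c"] cU l m sk continuous_on_subset by blast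
  have inner: "deriv (\<lambda>s. Gm c A L (\<lambda>t. 0 + r * m t + s * l t) h k) 0 =
     integral {0..L} (\<lambda>t. (h t * k t) * DD1 A (0 + r * m t) (0 + r * deriv m t) (0 + r * deriv (deriv m) t) (l t) (deriv l t) (deriv (deriv l) t) (curv c t) (deriv (curv c) t))"
    if r: "r \<in> ball 0 \<delta>" for r
  proof -
    have pos: "Nf (r * m t + s * l t) (r * deriv m t + s * deriv l t) (curv c t) > 0" if "s \<in> ball 0 \<delta>" "t \<in> {0..L}" for s t
      using b[rule_format, of r s t] that r by (intro Nf_pos) auto
    have D: "((\<lambda>s. integral {0..L} (\<lambda>t. (h t * k t) * Dd A (r * m t + s * l t) (r * deriv m t + s * deriv l t) (r * deriv (deriv m) t + s * deriv (deriv l) t) (curv c t) (deriv (curv c) t)))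
       has_real_derivative
       integral {0..L} (\<lambda>t. (h t * k t) * DD1 A (r * m t + 0 * l t) (r * deriv m t + 0 * deriv l t) (r * deriv (deriv m) t + 0 * deriv (deriv l) t) (l t) (deriv l t) (deriv (deriv l) t) (curv c t) (deriv (curv c) t))) (at 0)"
      by (rule int_Dd_deriv[where p = "\<lambda>t. r * m t" and q = "\<lambda>t. r * deriv m t" and w = "\<lambda>t. r * deriv (deriv m) t", OF _ _ _ _ _ _ _ _ _ d pos])
        (use d in \<open>auto intro!: cU smooth_deriv l h k m sk smooth_mult\<close>)
    have E: "(\<lambda>s. Gm c A L (\<lambda>t. 0 + r * m t + s * l t) h k) = (\<lambda>s. integral {0..L} (\<lambda>t. (h t * k t) * Dd A (r * m t + s * l t) (r * deriv m t + s * deriv l t) (r * deriv (deriv m) t + s * deriv (deriv l) t) (curv c t) (deriv (curv c) t)))"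
      by (rule ext, subst Gm_lin2[OF m l]) (simp add: mult.assoc)
    show ?thesis using DERIV_imp_deriv[OF D] E by simp
  qed
  have pos2: "Nf (0 + r * m t) (0 + r * deriv m t) (curv c t) > 0" if "r \<in> ball 0 \<delta>" "t \<in> {0..L}" for r t
    using b[rule_format, of r 0 t] that d by (intro Nf_pos) auto
  have D2: "((\<lambda>r. integral {0..L} (\<lambda>t. (h t * k t) * DD1 A (0 + r * m t) (0 + r * deriv m t) (0 + r * deriv (deriv m) t) (l t) (deriv l t) (deriv (deriv l) t) (curv c t) (deriv (curv c) t)))
     has_real_derivative
     integral {0..L} (\<lambda>t. (h t * k t) * DD12 A (0 + 0 * m t) (0 + 0 * deriv m t) (0 + 0 * deriv (deriv m) t) (l t) (deriv l t) (deriv (deriv l) t) (m t) (deriv m t) (deriv (deriv m) t) (curv c t) (deriv (curv c) t))) (at 0)"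
    by (rule int_DD1_deriv[OF _ _ _ _ _ _ _ _ _ _ _ _ d pos2]) (use d in \<open>auto intro!: cU smooth_deriv l h k m sk smooth_mult\<close>)
  have D3: "((\<lambda>r. deriv (\<lambda>s. Gm c A L (\<lambda>t. 0 + r * m t + s * l t) h k) 0) has_real_derivative
     integral {0..L} (\<lambda>t. (h t * k t) * DD12 A (0 + 0 * m t) (0 + 0 * deriv m t) (0 + 0 * deriv (deriv m) t) (l t) (deriv l t) (deriv (deriv l) t) (m t) (deriv m t) (deriv (deriv m) t) (curv c t) (deriv (curv c) t))) (at 0)"
    by (rule has_field_derivative_transform_within_open[OF D2, of "ball 0 \<delta>"]) (use d inner in auto)
  show ?thesis unfolding d2G_def using DERIV_imp_deriv[OF D3]
    by (simp add: DD12_0 mult.assoc)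
qed

end


lemma cint: "continuous_on UNIV f \<Longrightarrow> (f::real\<Rightarrow>real) integrable_on {0..L}"
  by (rule integrable_continuous_interval, rule continuous_on_subset) auto

lemma sint: "smooth_fun f \<Longrightarrow> f integrable_on {0..L}"
  by (rule cint, rule smooth_cont)

lemma periodic_nat: "L_periodic L f \<Longrightarrow> f (x + real n * L) = f x"
proof (induction n arbitrary: x)
  case 0 then show ?case by simp
next
  case (Suc n)
  have "f (x + real (Suc n) * L) = f ((x + real n * L) + L)" by (simp add: algebra_simps)
  also have "\<dots> = f (x + real n * L)" using Suc.prems by (simp add: L_periodic_def)
  finally show ?case using Suc by simp
qed

lemma periodic_zero: assumes p: "L_periodic L f" and L: "L > 0" and z: "\<forall>t\<in>{0..L}. f t = 0"
  shows "f t = 0"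
proof -
  define n where "n = floor (t / L)"
  define t0 where "t0 = t - of_int n * L"
  have "of_int n \<le> t / L" "t / L < of_int n + 1" unfolding n_def by linarith+
  then have t0: "t0 \<in> {0..L}" unfolding t0_def using L by (auto simp: field_simps)
  show ?thesis
  proof (cases "n \<ge> 0")
    case True
    then have "t = t0 + real (nat n) * L" unfolding t0_def by simp
    then show ?thesis using periodic_nat[OF p] z t0 by metis
  next
    case False
    then have "t0 = t + real (nat (-n)) * L" unfolding t0_def by simp
    then have "f t0 = f t" using periodic_nat[OF p] by metis
    then show ?thesis using z t0 by simp
  qed
qed

lemma ibp: assumes F: "smooth_fun F" "L_periodic L F" and l: "smooth_fun l" "L_periodic L l" and L: "L > 0"
  shows "integral {0..L} (\<lambda>t. F t * deriv (deriv l) t) = integral {0..L} (\<lambda>t. deriv (deriv F) t * l t)"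
proof -
  define G where "G = (\<lambda>t. F t * deriv l t - deriv F t * l t)"
  have "((\<lambda>t. F t * deriv (deriv l) t - deriv (deriv F) t * l t) has_integral (G L - G 0)) {0..L}"
  proof (rule fundamental_theorem_of_calculus)
    show "0 \<le> L" using L by simp
    fix x assume "x \<in> {0..L}"
    have "(G has_real_derivative F x * deriv (deriv l) x - deriv (deriv F) x * l x) (at x)"
      unfolding G_def
      by (rule derivative_eq_intros smooth_DERIV F l smooth_deriv refl)+ (simp add: algebra_simps)
    then show "(G has_vector_derivative F x * deriv (deriv l) x - deriv (deriv F) x * l x) (at x within {0..L})"
      by (simp add: has_real_derivative_iff_has_vector_derivative has_vector_derivative_at_within)
  qed
  moreover have "G L = G 0" unfolding G_def
    using F(2)[unfolded L_periodic_def, rule_format, of 0] l(2)[unfolded L_periodic_def, rule_format, of 0]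
      periodic_deriv[OF F, unfolded L_periodic_def, rule_format, of 0] periodic_deriv[OF l, unfolded L_periodic_def, rule_format, of 0]
    by simp
  ultimately have "integral {0..L} (\<lambda>t. F t * deriv (deriv l) t - deriv (deriv F) t * l t) = 0"
    by (simp add: integral_unique)
  moreover have "integral {0..L} (\<lambda>t. F t * deriv (deriv l) t - deriv (deriv F) t * l t) =
      integral {0..L} (\<lambda>t. F t * deriv (deriv l) t) - integral {0..L} (\<lambda>t. deriv (deriv F) t * l t)"
    by (rule integral_diff; rule sint; intro smooth_mult smooth_deriv F l)
  ultimately show ?thesis by simp
qed

lemma Cinf_sub: "f \<in> Cinf L \<Longrightarrow> g \<in> Cinf L \<Longrightarrow> (\<lambda>t. f t - g t) \<in> Cinf L"
  by (auto simp: Cinf_def L_periodic_def)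

definition Gam :: "(real \<Rightarrow> complex) \<Rightarrow> real \<Rightarrow> (real \<Rightarrow> real) \<Rightarrow> (real \<Rightarrow> real) \<Rightarrow> real \<Rightarrow> real" where
  "Gam c A h k = (\<lambda>t. ((1/2 * curv c t - 1/2 * A * (curv c t)^3 + A * deriv (deriv (curv c)) t) * h t * k t
               + 2 * A * deriv (curv c) t * (deriv h t * k t + h t * deriv k t)
               + 2 * A * curv c t * deriv h t * deriv k t) / (1 + A * (curv c t)\<^sup>2))"

context
  fixes c :: "real \<Rightarrow> complex" and L :: real
  assumes sc: "smooth_curve c" and unit: "\<forall>t. cmod (vderiv c t) = 1" and pc: "L_periodic L c" and L: "L > 0"
begin

lemma periodic_curv: "L_periodic L (curv c)"
  using periodic_vderiv[OF sc pc] periodic_vderiv[OF sc_vderiv[OF sc] periodic_vderiv[OF sc pc]]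
  by (simp add: L_periodic_def curv_def)

lemma Gm0: "Gm c A L (\<lambda>_. 0) g l = integral {0..L} (\<lambda>t. g t * l t * (1 + A * (curv c t)^2))"
proof -
  have d: "deriv (\<lambda>_. 0::real) = (\<lambda>_. 0)" by (rule deriv_const_fun)
  show ?thesis by (subst Gm_eq[OF sc unit]) (auto simp: d Dd_0)
qed

lemma Gam_Cinf: assumes A: "A \<ge> 0" and h: "h \<in> Cinf L" and k: "k \<in> Cinf L" shows "Gam c A h k \<in> Cinf L"
proof -
  have sk: "smooth_fun (curv c)" using smooth_curv[OF sc unit] .
  have pk: "L_periodic L (curv c)" "L_periodic L (deriv (curv c))" "L_periodic L (deriv (deriv (curv c)))"
    using periodic_curv periodic_deriv sk smooth_deriv by blast+
  have hh: "smooth_fun h" "L_periodic L h" "smooth_fun k" "L_periodic L k" using h k by (auto simp: Cinf_def)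
  have ph: "L_periodic L (deriv h)" "L_periodic L (deriv k)" using periodic_deriv hh by blast+
  have nz: "\<forall>t. 1 + A * (curv c t)\<^sup>2 \<noteq> 0" using A by (smt (verit) mult_nonneg_nonneg zero_le_power2)
  have "smooth_fun (Gam c A h k)" unfolding Gam_def
    by (intro smooth_div smooth_add smooth_mult smooth_sub smooth_const smooth_power smooth_deriv sk hh nz)
  moreover have "L_periodic L (Gam c A h k)" using pk hh ph unfolding Gam_def L_periodic_def by simp
  ultimately show ?thesis by (simp add: Cinf_def)
qed

end


lemma hi: "smooth_fun f \<Longrightarrow> (f has_integral integral {0..L} f) {0..L}"
  using sint integrable_integral by blast

context
  fixes c :: "real \<Rightarrow> complex" and L :: real
  assumes sc: "smooth_curve c" and unit: "\<forall>t. cmod (vderiv c t) = 1" and pc: "L_periodic L c" and L: "L > 0"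
begin

lemma Gam_prop: assumes A: "A \<ge> 0" and h: "h \<in> Cinf L" and k: "k \<in> Cinf L" and l: "l \<in> Cinf L"
  shows "2 * Gm c A L (\<lambda>_. 0) (Gam c A h k) l = dG c A L (\<lambda>_. 0) l h k - dG c A L (\<lambda>_. 0) h k l - dG c A L (\<lambda>_. 0) k l h"
proof -
  note sk = smooth_curv[OF sc unit]
  have hh: "smooth_fun h" "L_periodic L h" "smooth_fun k" "L_periodic L k" "smooth_fun l" "L_periodic L l"
    using h k l by (auto simp: Cinf_def)
  have nz: "1 + A * (curv c t)\<^sup>2 \<noteq> 0" for t using A by (smt (verit) mult_nonneg_nonneg zero_le_power2)
  define F where "F = (\<lambda>t. 2 * A * curv c t * h t * k t)"
  have sF: "smooth_fun F" unfolding F_def by (intro smooth_mult smooth_const sk hh)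
  have pF: "L_periodic L F" unfolding F_def using periodic_curv[OF sc unit pc L] hh by (simp add: L_periodic_def)
  have dF: "deriv F = (\<lambda>t. 2 * A * (deriv (curv c) t * h t * k t + curv c t * deriv h t * k t + curv c t * h t * deriv k t))"
    unfolding F_def by (rule ext, rule DERIV_imp_deriv) (rule derivative_eq_intros smooth_DERIV sk hh refl | simp add: algebra_simps)+
  have ddF: "deriv (deriv F) = (\<lambda>t. 2 * A * (deriv (deriv (curv c)) t * h t * k t + 2 * deriv (curv c) t * (deriv h t * k t + h t * deriv k t)
       + curv c t * (deriv (deriv h) t * k t + 2 * deriv h t * deriv k t + h t * deriv (deriv k) t)))"
    unfolding dF by (rule ext, rule DERIV_imp_deriv) (rule derivative_eq_intros smooth_DERIV sk hh smooth_deriv refl | simp add: algebra_simps)+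
  define E where "E = (\<lambda>t. A * curv c t ^ 3 - curv c t)"
  have sE: "smooth_fun E" unfolding E_def by (intro smooth_sub smooth_mult smooth_const smooth_power sk)
  have d1: "dG c A L (\<lambda>_. 0) l h k = integral {0..L} (\<lambda>t. h t * k t * E t * l t) + integral {0..L} (\<lambda>t. F t * deriv (deriv l) t)"
  proof -
    have "dG c A L (\<lambda>_. 0) l h k = integral {0..L} (\<lambda>t. h t * k t * E t * l t + F t * deriv (deriv l) t)"
      unfolding dG_formula[OF sc unit hh(5) hh(1) hh(3)] E_def F_def by (simp add: algebra_simps)
    also have "\<dots> = integral {0..L} (\<lambda>t. h t * k t * E t * l t) + integral {0..L} (\<lambda>t. F t * deriv (deriv l) t)"
      by (rule integral_add; rule sint; intro smooth_mult smooth_deriv hh sF sE)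
    finally show ?thesis .
  qed
  have d2: "dG c A L (\<lambda>_. 0) h k l = integral {0..L} (\<lambda>t. k t * l t * (E t * h t + 2 * A * curv c t * deriv (deriv h) t))"
    unfolding dG_formula[OF sc unit hh(1) hh(3) hh(5)] E_def by simp
  have d3: "dG c A L (\<lambda>_. 0) k l h = integral {0..L} (\<lambda>t. l t * h t * (E t * k t + 2 * A * curv c t * deriv (deriv k) t))"
    unfolding dG_formula[OF sc unit hh(3) hh(5) hh(1)] E_def by simp
  have ib: "integral {0..L} (\<lambda>t. F t * deriv (deriv l) t) = integral {0..L} (\<lambda>t. deriv (deriv F) t * l t)"
    by (rule ibp[OF sF pF hh(5) hh(6) L])
  have I: "((\<lambda>t. h t * k t * E t * l t + deriv (deriv F) t * l t - k t * l t * (E t * h t + 2 * A * curv c t * deriv (deriv h) t)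
       - l t * h t * (E t * k t + 2 * A * curv c t * deriv (deriv k) t)) has_integral
      (dG c A L (\<lambda>_. 0) l h k - dG c A L (\<lambda>_. 0) h k l - dG c A L (\<lambda>_. 0) k l h)) {0..L}"
    unfolding d1 d2 d3 ib
    by (intro has_integral_diff has_integral_add hi; intro smooth_mult smooth_add smooth_deriv smooth_const hh sF sE sk)
  have pw: "h t * k t * E t * l t + deriv (deriv F) t * l t - k t * l t * (E t * h t + 2 * A * curv c t * deriv (deriv h) t)
       - l t * h t * (E t * k t + 2 * A * curv c t * deriv (deriv k) t) = 2 * (Gam c A h k t * l t * (1 + A * (curv c t)^2))" for t
  proof -
    have g: "Gam c A h k t * (1 + A * (curv c t)^2) = ((1/2 * curv c t - 1/2 * A * (curv c t)^3 + A * deriv (deriv (curv c)) t) * h t * k t + 2 * A * deriv (curv c) t * (deriv h t * k t + h t * deriv k t) + 2 * A * curv c t * deriv h t * deriv k t)" using nz[of t] unfolding Gam_def by simp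
    have "2 * (Gam c A h k t * l t * (1 + A * (curv c t)^2)) = 2 * l t * (Gam c A h k t * (1 + A * (curv c t)^2))"
      by (simp add: algebra_simps)
    also have "\<dots> = 2 * l t * ((1/2 * curv c t - 1/2 * A * (curv c t)^3 + A * deriv (deriv (curv c)) t) * h t * k t + 2 * A * deriv (curv c) t * (deriv h t * k t + h t * deriv k t) + 2 * A * curv c t * deriv h t * deriv k t)"
      using g by simp
    finally have "2 * (Gam c A h k t * l t * (1 + A * (curv c t)^2)) = 2 * l t * ((1/2 * curv c t - 1/2 * A * (curv c t)^3 + A * deriv (deriv (curv c)) t) * h t * k t + 2 * A * deriv (curv c) t * (deriv h t * k t + h t * deriv k t) + 2 * A * curv c t * deriv h t * deriv k t)" .
    then show ?thesis unfolding ddF E_def by (simp add: algebra_simps power2_eq_square power3_eq_cube)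
  qed
  have "2 * Gm c A L (\<lambda>_. 0) (Gam c A h k) l = integral {0..L} (\<lambda>t. 2 * (Gam c A h k t * l t * (1 + A * (curv c t)^2)))"
    unfolding Gm0[OF sc unit pc L] by simp
  also have "\<dots> = dG c A L (\<lambda>_. 0) l h k - dG c A L (\<lambda>_. 0) h k l - dG c A L (\<lambda>_. 0) k l h"
    using integral_unique[OF I] pw by simp
  finally show ?thesis .
qed

lemma Chr_eq: assumes A: "A \<ge> 0" and h: "h \<in> Cinf L" and k: "k \<in> Cinf L"
  shows "Chr c A L (\<lambda>_. 0) h k = Gam c A h k"
  unfolding Chr_def
proof (rule the_equality)
  show "Gam c A h k \<in> Cinf L \<and> (\<forall>l\<in>Cinf L. 2 * Gm c A L (\<lambda>_. 0) (Gam c A h k) l = dG c A L (\<lambda>_. 0) l h k - dG c A L (\<lambda>_. 0) h k l - dG c A L (\<lambda>_. 0) k l h)"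
    using Gam_Cinf[OF sc unit pc L A h k] Gam_prop[OF A h k] by blast
  fix g assume g: "g \<in> Cinf L \<and> (\<forall>l\<in>Cinf L. 2 * Gm c A L (\<lambda>_. 0) g l = dG c A L (\<lambda>_. 0) l h k - dG c A L (\<lambda>_. 0) h k l - dG c A L (\<lambda>_. 0) k l h)"
  define g0 where "g0 = Gam c A h k"
  have g0: "g0 \<in> Cinf L" unfolding g0_def using Gam_Cinf[OF sc unit pc L A h k] .
  define d where "d = (\<lambda>t. g t - g0 t)"
  have dC: "d \<in> Cinf L" unfolding d_def using Cinf_sub g g0 by blast
  have "Gm c A L (\<lambda>_. 0) g d = Gm c A L (\<lambda>_. 0) g0 d"
    using g dC Gam_prop[OF A h k dC] unfolding g0_def by auto
  then have "integral {0..L} (\<lambda>t. g t * d t * (1 + A * (curv c t)^2)) - integral {0..L} (\<lambda>t. g0 t * d t * (1 + A * (curv c t)^2)) = 0"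
    unfolding Gm0[OF sc unit pc L] by simp
  moreover have "integral {0..L} (\<lambda>t. g t * d t * (1 + A * (curv c t)^2)) - integral {0..L} (\<lambda>t. g0 t * d t * (1 + A * (curv c t)^2))
     = integral {0..L} (\<lambda>t. d t * d t * (1 + A * (curv c t)^2))"
  proof -
    have sm: "smooth_fun g" "smooth_fun g0" "smooth_fun d" using g g0 dC by (auto simp: Cinf_def)
    have "integral {0..L} (\<lambda>t. g t * d t * (1 + A * (curv c t)^2)) - integral {0..L} (\<lambda>t. g0 t * d t * (1 + A * (curv c t)^2))
       = integral {0..L} (\<lambda>t. g t * d t * (1 + A * (curv c t)^2) - g0 t * d t * (1 + A * (curv c t)^2))"
      by (rule integral_diff[symmetric]; rule sint; intro smooth_mult smooth_add smooth_power smooth_const sm smooth_curv[OF sc unit])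
    also have "\<dots> = integral {0..L} (\<lambda>t. d t * d t * (1 + A * (curv c t)^2))"
      unfolding d_def by (simp add: algebra_simps)
    finally show ?thesis .
  qed
  moreover have sI: "smooth_fun (\<lambda>t. d t * d t * (1 + A * (curv c t)^2))"
    using dC smooth_curv[OF sc unit] by (intro smooth_mult smooth_add smooth_const smooth_power) (auto simp: Cinf_def)
  ultimately have I0: "((\<lambda>t. d t * d t * (1 + A * (curv c t)^2)) has_integral 0) {0..L}"
    using hi[OF sI, of L] by simp
  have z: "\<forall>t\<in>{0..L}. d t * d t * (1 + A * (curv c t)^2) = 0"
  proof
    fix t assume t: "t \<in> {0..L}"
    show "d t * d t * (1 + A * (curv c t)^2) = 0"
    proof (rule has_integral_0_cbox_imp_0[of 0 L "\<lambda>t. d t * d t * (1 + A * (curv c t)^2)"])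
      show "continuous_on (cbox 0 L) (\<lambda>t. d t * d t * (1 + A * (curv c t)\<^sup>2))"
        using sI by (rule smooth_cont)
      show "\<And>x. x \<in> box 0 L \<Longrightarrow> 0 \<le> d x * d x * (1 + A * (curv c x)\<^sup>2)"
        by (rule mult_nonneg_nonneg[OF zero_le_square]) (use A in simp)
      show "((\<lambda>t. d t * d t * (1 + A * (curv c t)\<^sup>2)) has_integral 0) (cbox 0 L)" using I0 by simp
      show "box 0 L \<noteq> {}" using L by simp
      show "t \<in> cbox 0 L" using t by simp
    qed
  qed
  have "\<forall>t\<in>{0..L}. d t = 0"
  proof
    fix t assume t: "t \<in> {0..L}"
    have "1 + A * (curv c t)\<^sup>2 \<noteq> 0" using A by (smt (verit) mult_nonneg_nonneg zero_le_power2)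
    then show "d t = 0" using z t by auto
  qed
  then have "d t = 0" for t using periodic_zero[of L d t] dC L by (auto simp: Cinf_def)
  then show "g = Gam c A h k" unfolding d_def g0_def by (auto simp: fun_eq_iff)
qed

end


lemma alg1: fixes al be ga m m1 h h1 :: real shows
 "(al*m*m + be*(m1*m + m*m1) + ga*m1*m1) * (al*h*h + be*(h1*h + h*h1) + ga*h1*h1)
  - (al*h*m + be*(h1*m + h*m1) + ga*h1*m1) * (al*m*h + be*(m1*h + m*h1) + ga*m1*h1)
  = (al*ga - be^2) * (m*h1 - m1*h)^2"
  by (simp add: algebra_simps power2_eq_square)

definition BB :: "real \<Rightarrow> real \<Rightarrow> real \<Rightarrow> real \<Rightarrow> real \<Rightarrow> real \<Rightarrow> real \<Rightarrow> real \<Rightarrow> real \<Rightarrow> real" where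
 "BB A k k1 l l1 l2 m m1 m2 = 2*A*(k*k*k*k)*l*m + 4*A*k^2*(l*m2 + l2*m)
     + 2*A*l2*m2 + (A*k^2 - 1)*l1*m1
     + 2*A*k*k1*(l*m1 + l1*m)"

lemma alg2: fixes A k k1 m m1 m2 h h1 h2 :: real shows
  "- (h*m*BB A k k1 h h1 h2 m m1 m2) + 1/2*(h*h*BB A k k1 m m1 m2 m m1 m2) + 1/2*(m*m*BB A k k1 h h1 h2 h h1 h2)
   = (A*k^2 - 1)/2 * (m*h1 - m1*h)^2 + A*(m*h2 - m2*h)^2"
  unfolding BB_def by (simp add: field_simps power2_eq_square)

definition NN :: "real \<Rightarrow> real \<Rightarrow> real \<Rightarrow> real \<Rightarrow> real \<Rightarrow> real \<Rightarrow> real \<Rightarrow> real \<Rightarrow> real" where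
 "NN A k k1 k2 a a1 b b1 = (1/2 * k - 1/2 * A * k^3 + A * k2) * a * b + 2 * A * k1 * (a1 * b + a * b1) + 2 * A * k * a1 * b1"

lemma pwR: fixes A k k1 k2 m m1 m2 h h1 h2 :: real assumes E: "1 + A * k\<^sup>2 \<noteq> 0"
  shows "- (h*m*BB A k k1 h h1 h2 m m1 m2) + 1/2*(h*h*BB A k k1 m m1 m2 m m1 m2) + 1/2*(m*m*BB A k k1 h h1 h2 h h1 h2)
     - (NN A k k1 k2 h h1 m m1 / (1 + A * k\<^sup>2)) * (NN A k k1 k2 m m1 h h1 / (1 + A * k\<^sup>2)) * (1 + A * k\<^sup>2)
     + (NN A k k1 k2 m m1 m m1 / (1 + A * k\<^sup>2)) * (NN A k k1 k2 h h1 h h1 / (1 + A * k\<^sup>2)) * (1 + A * k\<^sup>2)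
   = (- (A * k\<^sup>2 - 1)\<^sup>2 + 4 * A\<^sup>2 * k * k2 - 8 * A\<^sup>2 * k1\<^sup>2) / (2 * (1 + A * k\<^sup>2)) * (m*h1 - m1*h)\<^sup>2
     + A * (m*h2 - m2*h)\<^sup>2"
proof -
  define E where "E = 1 + A * k\<^sup>2"
  have e: "E \<noteq> 0" using E unfolding E_def .
  have g: "- (NN A k k1 k2 h h1 m m1 / E) * (NN A k k1 k2 m m1 h h1 / E) * E
     + (NN A k k1 k2 m m1 m m1 / E) * (NN A k k1 k2 h h1 h h1 / E) * E
     = (NN A k k1 k2 m m1 m m1 * NN A k k1 k2 h h1 h h1 - NN A k k1 k2 h h1 m m1 * NN A k k1 k2 m m1 h h1) / E"
    using e by (simp add: field_simps power2_eq_square)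
  also have "\<dots> = ((1/2 * k - 1/2 * A * k^3 + A * k2) * (2*A*k) - (2*A*k1)^2) * (m*h1 - m1*h)^2 / E"
    unfolding NN_def using alg1[of "1/2 * k - 1/2 * A * k^3 + A * k2" m "2*A*k1" m1 "2*A*k" h h1]
    by (simp add: algebra_simps)
  finally have g: "- (NN A k k1 k2 h h1 m m1 / E) * (NN A k k1 k2 m m1 h h1 / E) * E
     + (NN A k k1 k2 m m1 m m1 / E) * (NN A k k1 k2 h h1 h h1 / E) * E
     = ((1/2 * k - 1/2 * A * k^3 + A * k2) * (2*A*k) - (2*A*k1)^2) * (m*h1 - m1*h)^2 / E" .
  have x: "(A*k^2 - 1)/2 * (m*h1 - m1*h)^2 + ((1/2 * k - 1/2 * A * k^3 + A * k2) * (2*A*k) - (2*A*k1)^2) * (m*h1 - m1*h)^2 / E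
     = (- (A * k\<^sup>2 - 1)\<^sup>2 + 4 * A\<^sup>2 * k * k2 - 8 * A\<^sup>2 * k1\<^sup>2) / (2 * E) * (m*h1 - m1*h)\<^sup>2"
    using e unfolding E_def by (simp add: field_simps power2_eq_square power3_eq_cube)
  show ?thesis unfolding E_def[symmetric] using alg2[of h m A k k1 h1 h2 m1 m2] g x by (simp add: algebra_simps)
qed

lemma quad: fixes a b cc :: real assumes c: "cc \<ge> 0" and q: "\<forall>x. 0 \<le> a - 2*x*b + x^2*cc" shows "b^2 \<le> a*cc"
proof (cases "cc = 0")
  case True
  show ?thesis
  proof (cases "b = 0")
    case False
    have "0 \<le> a - 2*((a+1)/(2*b))*b" using q[rule_format, of "(a+1)/(2*b)"] True by simp
    with False show ?thesis by (simp add: field_simps)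
  qed (use True in simp)
next
  case False
  with c have cp: "cc > 0" by simp
  have "0 \<le> a - 2*(b/cc)*b + (b/cc)^2*cc" using q by blast
  then have "0 \<le> a - b^2/cc" using cp by (simp add: field_simps power2_eq_square)
  then show ?thesis using cp by (simp add: field_simps)
qed

context
  fixes c :: "real \<Rightarrow> complex" and L :: real
  assumes sc: "smooth_curve c" and unit: "\<forall>t. cmod (vderiv c t) = 1" and pc: "L_periodic L c" and L: "L > 0"
begin

lemma Rm_formula: assumes A: "A \<ge> 0" and mC: "m \<in> Cinf L" and hC: "h \<in> Cinf L"
  shows "Rm c A L (\<lambda>_. 0) m h =
    integral {0..L} (\<lambda>t. (- (A * (curv c t)\<^sup>2 - 1)\<^sup>2 + 4 * A\<^sup>2 * curv c t * deriv (deriv (curv c)) t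
                                 - 8 * A\<^sup>2 * (deriv (curv c) t)\<^sup>2) / (2 * (1 + A * (curv c t)\<^sup>2)) * (m t * deriv h t - deriv m t * h t)\<^sup>2)
    + integral {0..L} (\<lambda>t. A * (deriv (\<lambda>t. m t * deriv h t - deriv m t * h t) t)\<^sup>2)"
proof -
  note sk = smooth_curv[OF sc unit]
  have m: "smooth_fun m" and h: "smooth_fun h" using mC hC by (auto simp: Cinf_def)
  have nz: "1 + A * (curv c t)\<^sup>2 \<noteq> 0" for t using A by (smt (verit) mult_nonneg_nonneg zero_le_power2)
  have nz2: "\<forall>t. 2 * (1 + A * (curv c t)\<^sup>2) \<noteq> 0" using A by (smt (verit) mult_nonneg_nonneg zero_le_power2)
  have nz1: "\<forall>t. (1 + A * (curv c t)\<^sup>2) \<noteq> 0" using nz by simp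
  have dW: "deriv (\<lambda>t. m t * deriv h t - deriv m t * h t) = (\<lambda>t. m t * deriv (deriv h) t - deriv (deriv m) t * h t)"
    by (rule ext, rule DERIV_imp_deriv) (rule derivative_eq_intros smooth_DERIV m h smooth_deriv refl | simp add: algebra_simps)+
  define BBt where "BBt = (\<lambda>l m t. BB A (curv c t) (deriv (curv c) t) (l t) (deriv l t) (deriv (deriv l) t) (m t) (deriv m t) (deriv (deriv m) t))"
  have d2: "d2G c A L (\<lambda>_. 0) m l a b = integral {0..L} (\<lambda>t. a t * b t * BBt l m t)"
    if "smooth_fun m" "smooth_fun l" "smooth_fun a" "smooth_fun b" for m l a b
    unfolding BBt_def BB_def by (rule d2G_formula[OF sc unit that])
  have sBB: "smooth_fun (BBt l m)" if "smooth_fun m" "smooth_fun l" for l m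
    unfolding BBt_def BB_def by (intro smooth_mult smooth_add smooth_sub smooth_const smooth_power smooth_deriv that sk)
  have sG: "smooth_fun (Gam c A a b)" if "a \<in> Cinf L" "b \<in> Cinf L" for a b
    using Gam_Cinf[OF sc unit pc L A that] by (simp add: Cinf_def)
  have sE: "smooth_fun (\<lambda>t. 1 + A * (curv c t)\<^sup>2)" by (intro smooth_add smooth_mult smooth_const smooth_power sk)
  have G: "Gm c A L (\<lambda>_. 0) (Chr c A L (\<lambda>_. 0) a b) (Chr c A L (\<lambda>_. 0) a' b') =
     integral {0..L} (\<lambda>t. Gam c A a b t * Gam c A a' b' t * (1 + A * (curv c t)\<^sup>2))"
    if "a \<in> Cinf L" "b \<in> Cinf L" "a' \<in> Cinf L" "b' \<in> Cinf L" for a b a' b'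
    using Chr_eq[OF sc unit pc L A] that Gm0[OF sc unit pc L] by simp
  have I: "((\<lambda>t. - (h t * m t * BBt h m t) + 1/2 * (h t * h t * BBt m m t) + 1/2 * (m t * m t * BBt h h t)
      - Gam c A h m t * Gam c A m h t * (1 + A * (curv c t)\<^sup>2) + Gam c A m m t * Gam c A h h t * (1 + A * (curv c t)\<^sup>2))
      has_integral Rm c A L (\<lambda>_. 0) m h) {0..L}"
    unfolding Rm_def d2[OF m h h m] d2[OF m m h h] d2[OF h h m m] G[OF hC mC mC hC] G[OF mC mC hC hC]
    by (intro has_integral_add has_integral_diff has_integral_neg has_integral_mult_right hi;
        intro smooth_mult sBB sG sE m h mC hC)
  define X where "X = (\<lambda>t. (- (A * (curv c t)\<^sup>2 - 1)\<^sup>2 + 4 * A\<^sup>2 * curv c t * deriv (deriv (curv c)) t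
                                 - 8 * A\<^sup>2 * (deriv (curv c) t)\<^sup>2) / (2 * (1 + A * (curv c t)\<^sup>2)))"
  have sX: "smooth_fun X" unfolding X_def
    by (intro smooth_div smooth_add smooth_sub smooth_mult smooth_const smooth_power smooth_deriv smooth_minus sk nz2)
  have sW: "smooth_fun (\<lambda>t. m t * deriv h t - deriv m t * h t)" by (intro smooth_sub smooth_mult smooth_deriv m h)
  have sW': "smooth_fun (\<lambda>t. m t * deriv (deriv h) t - deriv (deriv m) t * h t)" by (intro smooth_sub smooth_mult smooth_deriv m h)
  have pw: "- (h t * m t * BBt h m t) + 1/2 * (h t * h t * BBt m m t) + 1/2 * (m t * m t * BBt h h t)
      - Gam c A h m t * Gam c A m h t * (1 + A * (curv c t)\<^sup>2) + Gam c A m m t * Gam c A h h t * (1 + A * (curv c t)\<^sup>2)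
      = X t * (m t * deriv h t - deriv m t * h t)\<^sup>2 + A * (m t * deriv (deriv h) t - deriv (deriv m) t * h t)\<^sup>2" for t
  proof -
    have gg: "Gam c A a b t = NN A (curv c t) (deriv (curv c) t) (deriv (deriv (curv c)) t) (a t) (deriv a t) (b t) (deriv b t) / (1 + A * (curv c t)\<^sup>2)" for a b
      unfolding Gam_def NN_def by simp
    show ?thesis unfolding gg BBt_def X_def by (rule pwR[OF nz[of t]])
  qed
  have "Rm c A L (\<lambda>_. 0) m h = integral {0..L} (\<lambda>t. X t * (m t * deriv h t - deriv m t * h t)\<^sup>2 + A * (m t * deriv (deriv h) t - deriv (deriv m) t * h t)\<^sup>2)"
    using integral_unique[OF I] pw by simp
  also have "\<dots> = integral {0..L} (\<lambda>t. X t * (m t * deriv h t - deriv m t * h t)\<^sup>2) + integral {0..L} (\<lambda>t. A * (m t * deriv (deriv h) t - deriv (deriv m) t * h t)\<^sup>2)"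
    by (rule integral_add; rule sint; intro smooth_mult smooth_power smooth_const sX sW sW')
  finally show ?thesis unfolding X_def dW .
qed

lemma cauchy_schwarz: assumes f: "smooth_fun f" and g: "smooth_fun g"
  shows "(integral {0..L} (\<lambda>t. f t * g t))^2 \<le> integral {0..L} (\<lambda>t. f t * f t) * integral {0..L} (\<lambda>t. g t * g t)"
proof (rule quad)
  show "0 \<le> integral {0..L} (\<lambda>t. g t * g t)"
    by (rule integral_nonneg) (auto intro!: sint smooth_mult g)
  show "\<forall>x. 0 \<le> integral {0..L} (\<lambda>t. f t * f t) - 2 * x * integral {0..L} (\<lambda>t. f t * g t) + x\<^sup>2 * integral {0..L} (\<lambda>t. g t * g t)"
  proof
    fix x :: real
    have HI: "((\<lambda>t. f t * f t - 2 * x * (f t * g t) + x\<^sup>2 * (g t * g t)) has_integral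
        integral {0..L} (\<lambda>t. f t * f t) - 2 * x * integral {0..L} (\<lambda>t. f t * g t) + x\<^sup>2 * integral {0..L} (\<lambda>t. g t * g t)) {0..L}"
      by (intro has_integral_add has_integral_diff has_integral_mult_right hi smooth_mult f g)
    have "0 \<le> integral {0..L} (\<lambda>t. f t * f t - 2 * x * (f t * g t) + x\<^sup>2 * (g t * g t))"
    proof (rule integral_nonneg)
      show "(\<lambda>t. f t * f t - 2 * x * (f t * g t) + x\<^sup>2 * (g t * g t)) integrable_on {0..L}"
        by (intro sint smooth_add smooth_sub smooth_mult smooth_const f g)
      fix t
      have "f t * f t - 2 * x * (f t * g t) + x\<^sup>2 * (g t * g t) = (f t - x * g t)^2" by (simp add: algebra_simps power2_eq_square)
      then show "0 \<le> f t * f t - 2 * x * (f t * g t) + x\<^sup>2 * (g t * g t)" by simp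
    qed
    then show "0 \<le> integral {0..L} (\<lambda>t. f t * f t) - 2 * x * integral {0..L} (\<lambda>t. f t * g t) + x\<^sup>2 * integral {0..L} (\<lambda>t. g t * g t)"
      unfolding integral_unique[OF HI] .
  qed
qed

end


theorem mainTheorem18:
  fixes L A :: real and c :: "real \<Rightarrow> complex"
  defines "\<kappa> \<equiv> curv c"
  assumes "L > 0" and "A \<ge> 0"
    and "smooth_curve c" and "L_periodic L c"
    and "\<forall>t. cmod (vderiv c t) = 1"
  shows
    "(\<forall>h\<in>Cinf L. \<forall>k\<in>Cinf L. Chr c A L (\<lambda>_. 0) h k =
        (\<lambda>t. ((1/2 * \<kappa> t - 1/2 * A * (\<kappa> t)^3 + A * deriv (deriv \<kappa>) t) * h t * k t
               + 2 * A * deriv \<kappa> t * (deriv h t * k t + h t * deriv k t)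
               + 2 * A * \<kappa> t * deriv h t * deriv k t) / (1 + A * (\<kappa> t)\<^sup>2)))
   \<and> (\<forall>m\<in>Cinf L. \<forall>h\<in>Cinf L.
        let W = (\<lambda>t. m t * deriv h t - deriv m t * h t) in
        Rm c A L (\<lambda>_. 0) m h =
          integral {0..L} (\<lambda>t. (- (A * (\<kappa> t)\<^sup>2 - 1)\<^sup>2 + 4 * A\<^sup>2 * \<kappa> t * deriv (deriv \<kappa>) t
                                 - 8 * A\<^sup>2 * (deriv \<kappa> t)\<^sup>2) / (2 * (1 + A * (\<kappa> t)\<^sup>2)) * (W t)\<^sup>2)
          + integral {0..L} (\<lambda>t. A * (deriv W t)\<^sup>2))
   \<and> (A = 0 \<longrightarrow>
        (\<forall>h\<in>Cinf L. \<forall>k\<in>Cinf L. Chr c A L (\<lambda>_. 0) h k = (\<lambda>t. 1/2 * \<kappa> t * h t * k t))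
      \<and> (\<forall>m\<in>Cinf L. \<forall>h\<in>Cinf L.
           let W = (\<lambda>t. m t * deriv h t - deriv m t * h t) in
           Rm c A L (\<lambda>_. 0) m h = - 1/2 * integral {0..L} (\<lambda>t. (W t)\<^sup>2)
           \<and> Rm c A L (\<lambda>_. 0) m h \<le> 0
           \<and> seccurv c A L (\<lambda>_. 0) m h \<ge> 0))"
proof -
  note sc = assms(4) and unit = assms(6) and pc = assms(5) and L = assms(2) and A = assms(3)
  have P1: "\<forall>h\<in>Cinf L. \<forall>k\<in>Cinf L. Chr c A L (\<lambda>_. 0) h k =
        (\<lambda>t. ((1/2 * \<kappa> t - 1/2 * A * (\<kappa> t)^3 + A * deriv (deriv \<kappa>) t) * h t * k t
               + 2 * A * deriv \<kappa> t * (deriv h t * k t + h t * deriv k t)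
               + 2 * A * \<kappa> t * deriv h t * deriv k t) / (1 + A * (\<kappa> t)\<^sup>2))"
    using Chr_eq[OF sc unit pc L A] unfolding \<kappa>_def Gam_def by blast
  have P2: "\<forall>m\<in>Cinf L. \<forall>h\<in>Cinf L.
        let W = (\<lambda>t. m t * deriv h t - deriv m t * h t) in
        Rm c A L (\<lambda>_. 0) m h =
          integral {0..L} (\<lambda>t. (- (A * (\<kappa> t)\<^sup>2 - 1)\<^sup>2 + 4 * A\<^sup>2 * \<kappa> t * deriv (deriv \<kappa>) t
                                 - 8 * A\<^sup>2 * (deriv \<kappa> t)\<^sup>2) / (2 * (1 + A * (\<kappa> t)\<^sup>2)) * (W t)\<^sup>2)
          + integral {0..L} (\<lambda>t. A * (deriv W t)\<^sup>2)"
    unfolding Let_def \<kappa>_def using Rm_formula[OF sc unit pc L A] by blast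
  have P3: "A = 0 \<longrightarrow>
        (\<forall>h\<in>Cinf L. \<forall>k\<in>Cinf L. Chr c A L (\<lambda>_. 0) h k = (\<lambda>t. 1/2 * \<kappa> t * h t * k t))
      \<and> (\<forall>m\<in>Cinf L. \<forall>h\<in>Cinf L.
           let W = (\<lambda>t. m t * deriv h t - deriv m t * h t) in
           Rm c A L (\<lambda>_. 0) m h = - 1/2 * integral {0..L} (\<lambda>t. (W t)\<^sup>2)
           \<and> Rm c A L (\<lambda>_. 0) m h \<le> 0
           \<and> seccurv c A L (\<lambda>_. 0) m h \<ge> 0)"
  proof
    assume A0: "A = 0"
    have C: "\<forall>h\<in>Cinf L. \<forall>k\<in>Cinf L. Chr c A L (\<lambda>_. 0) h k = (\<lambda>t. 1/2 * \<kappa> t * h t * k t)"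
      using Chr_eq[OF sc unit pc L A] unfolding \<kappa>_def Gam_def A0 by simp
    have R: "let W = (\<lambda>t. m t * deriv h t - deriv m t * h t) in
           Rm c A L (\<lambda>_. 0) m h = - 1/2 * integral {0..L} (\<lambda>t. (W t)\<^sup>2)
           \<and> Rm c A L (\<lambda>_. 0) m h \<le> 0
           \<and> seccurv c A L (\<lambda>_. 0) m h \<ge> 0" if mC: "m \<in> Cinf L" and hC: "h \<in> Cinf L" for m h
    proof -
      have m: "smooth_fun m" and h: "smooth_fun h" using mC hC by (auto simp: Cinf_def)
      define W where "W = (\<lambda>t. m t * deriv h t - deriv m t * h t)"
      have sW: "smooth_fun W" unfolding W_def by (intro smooth_sub smooth_mult smooth_deriv m h)
      have R1: "Rm c A L (\<lambda>_. 0) m h = - 1/2 * integral {0..L} (\<lambda>t. (W t)\<^sup>2)"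
        using Rm_formula[OF sc unit pc L A mC hC] unfolding A0 by (simp add: W_def)
      have W0: "0 \<le> integral {0..L} (\<lambda>t. (W t)\<^sup>2)"
        by (rule integral_nonneg) (auto intro!: sint smooth_power sW)
      have R2: "Rm c A L (\<lambda>_. 0) m h \<le> 0" using R1 W0 by simp
      have G: "Gm c A L (\<lambda>_. 0) a b = integral {0..L} (\<lambda>t. a t * b t)" for a b
        unfolding Gm0[OF sc unit pc L] A0 by simp
      have cs: "(integral {0..L} (\<lambda>t. m t * h t))^2 \<le> integral {0..L} (\<lambda>t. m t * m t) * integral {0..L} (\<lambda>t. h t * h t)"
        by (rule cauchy_schwarz[OF sc unit pc L m h])
      have S: "seccurv c A L (\<lambda>_. 0) m h \<ge> 0"
        unfolding seccurv_def G using R2 cs by (intro divide_nonneg_nonneg) auto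
      show ?thesis unfolding Let_def W_def[symmetric] using R1 R2 S by blast
    qed
    show "(\<forall>h\<in>Cinf L. \<forall>k\<in>Cinf L. Chr c A L (\<lambda>_. 0) h k = (\<lambda>t. 1/2 * \<kappa> t * h t * k t))
      \<and> (\<forall>m\<in>Cinf L. \<forall>h\<in>Cinf L.
           let W = (\<lambda>t. m t * deriv h t - deriv m t * h t) in
           Rm c A L (\<lambda>_. 0) m h = - 1/2 * integral {0..L} (\<lambda>t. (W t)\<^sup>2)
           \<and> Rm c A L (\<lambda>_. 0) m h \<le> 0
           \<and> seccurv c A L (\<lambda>_. 0) m h \<ge> 0)"
      using C R by blast
  qed
  show ?thesis using P1 P2 P3 by blast
qed


end
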